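(* Let $k$ be a positive integer and let $G$ be a connected $K_{1,4}$-free graph of order $n$. If $\sigma_2(G) \ge n-k$, then $G$ has a spanning tree $T$ with $|L(T)|+|B(T)| \le k+2$.
   Context: All graphs are finite and simple. For a tree $T$, a leaf is a vertex of degree one in $T$ and a branch vertex is a vertex of degree at least three in $T$; $L(T)$ and $B(T)$ denote the sets of leaves and of branch vertices of $T$. A graph is $K_{1,4}$-free if it contains no induced subgraph isomorphic to $K_{1,4}$. For a positive integer $p$, $\sigma_p(G)=+\infty$ if the independence number of $G$ is less than $p$, and otherwise $\sigma_p(G)$ is the minimum of $\sum_{i=1}^p d_G(v_i)$ over all independent sets $\{v_1,\dots,v_p\}$ of $G$ of size $p$. *)

theory Defs
  imports Main "HOL-Library.Extended_Nat"
begin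

definition simple_graph :: "'a set \<Rightarrow> 'a set set \<Rightarrow> bool" where
  "simple_graph V E \<longleftrightarrow> finite V \<and>
     (\<forall>e\<in>E. \<exists>u v. e = {u, v} \<and> u \<noteq> v \<and> u \<in> V \<and> v \<in> V)"

definition neighbours :: "'a set set \<Rightarrow> 'a \<Rightarrow> 'a set" where
  "neighbours E u = {v. {u, v} \<in> E}"

definition degree :: "'a set set \<Rightarrow> 'a \<Rightarrow> nat" where
  "degree E u = card (neighbours E u)"

definition connected_graph :: "'a set \<Rightarrow> 'a set set \<Rightarrow> bool" where
  "connected_graph V E \<longleftrightarrow> V \<noteq> {} \<and>
     (\<forall>u\<in>V. \<forall>v\<in>V. (u, v) \<in> {(x, y). {x, y} \<in> E}\<^sup>*)"

definition acyclic_graph :: "'a set set \<Rightarrow> bool" where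
  "acyclic_graph E \<longleftrightarrow>
     (\<forall>u v. {u, v} \<in> E \<longrightarrow> (u, v) \<notin> {(x, y). {x, y} \<in> E - {{u, v}}}\<^sup>*)"

definition is_tree :: "'a set \<Rightarrow> 'a set set \<Rightarrow> bool" where
  "is_tree V T \<longleftrightarrow> simple_graph V T \<and> connected_graph V T \<and> acyclic_graph T"

definition spanning_tree :: "'a set \<Rightarrow> 'a set set \<Rightarrow> 'a set set \<Rightarrow> bool" where
  "spanning_tree V E T \<longleftrightarrow> T \<subseteq> E \<and> is_tree V T"

definition leaves :: "'a set \<Rightarrow> 'a set set \<Rightarrow> 'a set" where
  "leaves V T = {v \<in> V. degree T v = 1}"

definition branch_vertices :: "'a set \<Rightarrow> 'a set set \<Rightarrow> 'a set" where
  "branch_vertices V T = {v \<in> V. degree T v \<ge> 3}"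

definition independent_set :: "'a set \<Rightarrow> 'a set set \<Rightarrow> 'a set \<Rightarrow> bool" where
  "independent_set V E S \<longleftrightarrow> S \<subseteq> V \<and> (\<forall>u\<in>S. \<forall>v\<in>S. {u, v} \<notin> E)"

definition K14_free :: "'a set \<Rightarrow> 'a set set \<Rightarrow> bool" where
  "K14_free V E \<longleftrightarrow> \<not> (\<exists>c\<in>V. \<exists>S. S \<subseteq> neighbours E c \<and> card S = 4 \<and> independent_set V E S)"

text \<open>sigma_p, with value \<infinity> if there is no independent set of size p (Inf {} = \<infinity> in enat).\<close>
definition sigma :: "nat \<Rightarrow> 'a set \<Rightarrow> 'a set set \<Rightarrow> enat" where
  "sigma p V E = Inf {enat (\<Sum>v\<in>S. degree E v) | S. independent_set V E S \<and> card S = p}"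

end

theory Submission
  imports Defs
begin


definition reach :: "'a set set \<Rightarrow> 'a \<Rightarrow> 'a \<Rightarrow> bool" where
  "reach F x y \<longleftrightarrow> (x, y) \<in> {(a, b). {a, b} \<in> F}\<^sup>*"

lemma reach_refl[simp]: "reach F x x" by (simp add: reach_def)

lemma reach_edge: "{x, y} \<in> F \<Longrightarrow> reach F x y"
  by (auto simp: reach_def)

lemma reach_trans: "reach F x y \<Longrightarrow> reach F y z \<Longrightarrow> reach F x z"
  unfolding reach_def by (rule rtrancl_trans)

lemma reach_step: "reach F x y \<Longrightarrow> {y, z} \<in> F \<Longrightarrow> reach F x z"
  using reach_edge reach_trans by metis

lemma reach_sym: "reach F x y \<Longrightarrow> reach F y x"
  unfolding reach_def
proof (induction rule: rtrancl_induct)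
  case base then show ?case by simp
next
  case (step y z)
  then have "(z, y) \<in> {(a, b). {a, b} \<in> F}" by (auto simp: insert_commute)
  then show ?case using step by (meson converse_rtrancl_into_rtrancl)
qed

lemma reach_mono: "F \<subseteq> G \<Longrightarrow> reach F x y \<Longrightarrow> reach G x y"
  unfolding reach_def
  by (rule rtrancl_mono[THEN subsetD]) auto

lemma reach_induct[consumes 1, case_names base step]:
  assumes "reach F a x" "P a" "\<And>y z. reach F a y \<Longrightarrow> {y, z} \<in> F \<Longrightarrow> P y \<Longrightarrow> P z"
  shows "P x"
  using assms(1) unfolding reach_def
proof (induction rule: rtrancl_induct)
  case base then show ?case using assms(2) by simp
next
  case (step y z) then show ?case using assms(3)[of y z] by (auto simp: reach_def)
qed

lemma reach_restrict:
  assumes "reach F a x"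
  shows "reach {f\<in>F. f \<subseteq> {w. reach F a w}} a x"
  using assms
proof (induction rule: reach_induct)
  case base then show ?case by simp
next
  case (step y z)
  then have "reach F a z" using reach_step by metis
  then have "{y, z} \<in> {f\<in>F. f \<subseteq> {w. reach F a w}}" using step(1,2) by simp
  then show ?case using step(3) reach_step by metis
qed

lemma reach_avoid:
  assumes "reach F a x" "\<And>w. reach F a w \<Longrightarrow> w \<noteq> z"
  shows "reach {f\<in>F. z \<notin> f} a x"
proof -
  have h1: "reach {f\<in>F. f \<subseteq> {w. reach F a w}} a x" using reach_restrict[OF assms(1)] .
  have h2: "{f\<in>F. f \<subseteq> {w. reach F a w}} \<subseteq> {f\<in>F. z \<notin> f}" using assms(2) by blast
  show ?thesis using reach_mono[OF h2 h1] .
qed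

lemma reach_avoid_edge:
  assumes "reach F a x" "p \<in> e" "\<not> reach F a p"
  shows "reach (F - {e}) a x"
proof -
  have h1: "reach {f\<in>F. p \<notin> f} a x" using reach_avoid[OF assms(1), of p] assms(3) by blast
  have h2: "{f\<in>F. p \<notin> f} \<subseteq> F - {e}" using assms(2) by blast
  show ?thesis using reach_mono[OF h2 h1] .
qed

lemma reach_insert:
  assumes "reach (insert {a, b} F) x y"
  shows "reach F x y \<or> (reach F x a \<and> reach F b y) \<or> (reach F x b \<and> reach F a y)"
  using assms
proof (induction rule: reach_induct)
  case base then show ?case by simp
next
  case (step y z)
  show ?case
  proof (cases "{y, z} = {a, b}")
    case True
    then have yz: "(y = a \<and> z = b) \<or> (y = b \<and> z = a)" by (auto simp: doubleton_eq_iff)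
    from step.IH show ?thesis
    proof (elim disjE conjE)
      assume "reach F x y" then show ?thesis using yz by auto
    next
      assume h: "reach F x a" "reach F b y"
      show ?thesis using yz
      proof
        assume "y = a \<and> z = b"
        then show ?thesis using h reach_trans reach_sym by metis
      next
        assume "y = b \<and> z = a" then show ?thesis using h by auto
      qed
    next
      assume h: "reach F x b" "reach F a y"
      show ?thesis using yz
      proof
        assume "y = a \<and> z = b" then show ?thesis using h by auto
      next
        assume "y = b \<and> z = a"
        then show ?thesis using h reach_trans reach_sym by metis
      qed
    qed
  next
    case False
    then have "{y, z} \<in> F" using step by auto
    then show ?thesis using step.IH reach_step by metis
  qed
qed

lemma reach_first_step:
  assumes "reach F x y" "x \<noteq> y"
  shows "\<exists>s. {x, s} \<in> F \<and> reach {f\<in>F. x \<notin> f} s y"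
proof -
  have "y = x \<or> (\<exists>s. {x, s} \<in> F \<and> reach {f\<in>F. x \<notin> f} s y)"
    using assms(1)
  proof (induction rule: reach_induct)
    case base then show ?case by simp
  next
    case (step y z)
    show ?case
    proof (cases "z = x")
      case True then show ?thesis by simp
    next
      case False
      show ?thesis
      proof (cases "y = x")
        case True
        then have "{x, z} \<in> F" using step(2) by simp
        then have "{x, z} \<in> F \<and> reach {f\<in>F. x \<notin> f} z z" by simp
        then show ?thesis by blast
      next
        case yx: False
        then obtain s where s1: "{x, s} \<in> F" and s2: "reach {f\<in>F. x \<notin> f} s y" using step(3) by blast
        have "{y, z} \<in> {f\<in>F. x \<notin> f}" using step(2) yx False by simp
        then have "reach {f\<in>F. x \<notin> f} s z" using s2 reach_step by fast
        then show ?thesis using s1 by blast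
      qed
    qed
  qed
  then show ?thesis using assms(2) by simp
qed

lemma reach_del_edge:
  assumes "reach F x y" "reach (F - {{p, q}}) p q"
  shows "reach (F - {{p, q}}) x y"
  using assms(1)
proof (induction rule: reach_induct)
  case base then show ?case by simp
next
  case (step y z)
  show ?case
  proof (cases "{y, z} = {p, q}")
    case True
    then have "(y = p \<and> z = q) \<or> (y = q \<and> z = p)" by (auto simp: doubleton_eq_iff)
    then show ?thesis
    proof
      assume "y = p \<and> z = q" then show ?thesis using step(3) assms(2) reach_trans by fast
    next
      assume "y = q \<and> z = p" then show ?thesis using step(3) assms(2) reach_trans reach_sym by fast
    qed
  next
    case False
    then have "{y, z} \<in> F - {{p, q}}" using step(2) by simp
    then show ?thesis using step(3) reach_step by fast
  qed
qed

lemma connected_reach: "connected_graph V E \<longleftrightarrow> V \<noteq> {} \<and> (\<forall>u\<in>V. \<forall>v\<in>V. reach E u v)"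
  by (simp add: connected_graph_def reach_def)

lemma acyclic_reach: "acyclic_graph E \<longleftrightarrow> (\<forall>u v. {u, v} \<in> E \<longrightarrow> \<not> reach (E - {{u, v}}) u v)"
  by (simp add: acyclic_graph_def reach_def)




definition Tz :: "'a set set \<Rightarrow> 'a \<Rightarrow> 'a set set" where
  "Tz T z = {f\<in>T. z \<notin> f}"

locale tree_on =
  fixes V :: "'a set" and T :: "'a set set"
  assumes tr: "is_tree V T"
begin

lemma fin: "finite V" using tr by (simp add: is_tree_def simple_graph_def)

lemma edge: "e \<in> T \<Longrightarrow> \<exists>u v. e = {u, v} \<and> u \<noteq> v \<and> u \<in> V \<and> v \<in> V"
  using tr by (simp add: is_tree_def simple_graph_def)

lemma edge_V: assumes "{x, y} \<in> T" shows "x \<in> V" "y \<in> V" "x \<noteq> y"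
proof -
  obtain u v where "{x, y} = {u, v}" "u \<noteq> v" "u \<in> V" "v \<in> V" using edge[OF assms] by blast
  then show "x \<in> V" "y \<in> V" "x \<noteq> y" by (auto simp: doubleton_eq_iff)
qed

lemma conn: "x \<in> V \<Longrightarrow> y \<in> V \<Longrightarrow> reach T x y"
  using tr by (simp add: is_tree_def connected_reach)

lemma V_ne: "V \<noteq> {}"
  using tr by (simp add: is_tree_def connected_reach)

lemma bridge: "{p, q} \<in> T \<Longrightarrow> \<not> reach (T - {{p, q}}) p q"
  using tr by (simp add: is_tree_def acyclic_reach)

lemma reach_V: assumes "reach F x y" "F \<subseteq> T" "x \<in> V" shows "y \<in> V"
  using assms(1)
proof (induction rule: reach_induct)
  case base then show ?case using assms(3) .
next
  case (step y z) then show ?case using assms(2) edge_V(2)[of y z] by blast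
qed

lemma cut:
  assumes "{p, q} \<in> T" "x \<in> V"
  shows "reach (T - {{p, q}}) p x \<or> reach (T - {{p, q}}) q x"
proof -
  have "p \<in> V" using edge_V[OF assms(1)] by simp
  then have "reach T p x" using conn assms(2) by simp
  then show ?thesis
  proof (induction rule: reach_induct)
    case base then show ?case by simp
  next
    case (step y z)
    show ?case
    proof (cases "{y, z} = {p, q}")
      case True
      then have "z = p \<or> z = q" by (auto simp: doubleton_eq_iff)
      then show ?thesis by auto
    next
      case False
      then have "{y, z} \<in> T - {{p, q}}" using step(2) by simp
      then show ?thesis using step(3) reach_step by fast
    qed
  qed
qed

lemma cut_other:
  assumes "{p, q} \<in> T" "x \<in> V" "\<not> reach (T - {{p, q}}) p x"
  shows "reach (T - {{p, q}}) q x"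
  using cut[OF assms(1,2)] assms(3) by blast

lemma side_sym: "T - {{q, p}} = T - {{p, q}}" by (simp add: insert_commute)

lemma bridge': "{p, q} \<in> T \<Longrightarrow> \<not> reach (T - {{p, q}}) q p"
  using bridge reach_sym by fast

lemma nbr_V: "neighbours T x \<subseteq> V"
  unfolding neighbours_def using edge_V by blast

lemma nbr_fin: "finite (neighbours T x)"
  using nbr_V fin finite_subset by blast

lemma in_nbr: "y \<in> neighbours T x \<longleftrightarrow> {x, y} \<in> T"
  by (simp add: neighbours_def)

lemma Tz_sub: "{z, c} \<in> T \<Longrightarrow> Tz T z \<subseteq> T - {{z, c}}"
  unfolding Tz_def by blast

lemma side_Tz:
  assumes "{z, c} \<in> T"
  shows "reach (T - {{z, c}}) c x \<longleftrightarrow> reach (Tz T z) c x"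
proof
  assume h: "reach (T - {{z, c}}) c x"
  have nz: "\<And>w. reach (T - {{z, c}}) c w \<Longrightarrow> w \<noteq> z"
  proof
    fix w assume "reach (T - {{z, c}}) c w" "w = z"
    then show False using bridge'[OF assms] by simp
  qed
  have h2: "reach {f\<in>T - {{z, c}}. z \<notin> f} c x" using reach_avoid[OF h nz] .
  have sub: "{f\<in>T - {{z, c}}. z \<notin> f} \<subseteq> Tz T z" unfolding Tz_def by blast
  show "reach (Tz T z) c x" using reach_mono[OF sub h2] .
next
  assume "reach (Tz T z) c x"
  then show "reach (T - {{z, c}}) c x" using reach_mono[OF Tz_sub[OF assms]] by simp
qed

lemma comps_disj:
  assumes "{z, c} \<in> T" "{z, c'} \<in> T" "c \<noteq> c'" "reach (Tz T z) c x" "reach (Tz T z) c' x"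
  shows False
proof -
  have "reach (Tz T z) c c'" using assms(4,5) reach_sym reach_trans by fast
  then have "reach (T - {{z, c}}) c c'" using reach_mono[OF Tz_sub[OF assms(1)]] by blast
  moreover have "{c', z} \<in> T - {{z, c}}" using assms(2,3) by (auto simp: insert_commute doubleton_eq_iff)
  ultimately have "reach (T - {{z, c}}) c z" using reach_step by fast
  then show False using bridge'[OF assms(1)] by blast
qed

lemma toward_ex:
  assumes "w \<in> V" "u \<in> V" "w \<noteq> u"
  shows "\<exists>s. {w, s} \<in> T \<and> \<not> reach (T - {{w, s}}) w u"
proof -
  have "reach T w u" using conn assms by simp
  then obtain s where s1: "{w, s} \<in> T" and s2: "reach {f\<in>T. w \<notin> f} s u"
    using reach_first_step[OF _ assms(3)] by blast
  have sub: "{f\<in>T. w \<notin> f} \<subseteq> T - {{w, s}}" by blast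
  have "\<not> reach (T - {{w, s}}) w u"
  proof
    assume "reach (T - {{w, s}}) w u"
    moreover have "reach (T - {{w, s}}) s u" using reach_mono[OF sub s2] .
    ultimately have "reach (T - {{w, s}}) w s" using reach_sym reach_trans by fast
    then show False using bridge[OF s1] by blast
  qed
  then show ?thesis using s1 by blast
qed

lemma toward_uniq:
  assumes "w \<in> V" "u \<in> V" "w \<noteq> u"
    and "{w, s1} \<in> T" "\<not> reach (T - {{w, s1}}) w u"
    and "{w, s2} \<in> T" "\<not> reach (T - {{w, s2}}) w u"
  shows "s1 = s2"
proof (rule ccontr)
  assume ne: "s1 \<noteq> s2"
  have r1: "reach (T - {{w, s1}}) s1 u" using cut_other[OF assms(4) assms(2) assms(5)] .
  have r2: "reach (T - {{w, s2}}) s2 u" using cut_other[OF assms(6) assms(2) assms(7)] .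
  have a1: "reach (Tz T w) s1 u" using side_Tz[OF assms(4)] r1 by blast
  have a2: "reach (Tz T w) s2 u" using side_Tz[OF assms(6)] r2 by blast
  show False using comps_disj[OF assms(4) assms(6) ne a1 a2] .
qed

definition toward :: "'a \<Rightarrow> 'a \<Rightarrow> 'a" where
  "toward w u = (THE s. {w, s} \<in> T \<and> \<not> reach (T - {{w, s}}) w u)"

lemma toward:
  assumes "w \<in> V" "u \<in> V" "w \<noteq> u"
  shows "{w, toward w u} \<in> T" "\<not> reach (T - {{w, toward w u}}) w u"
proof -
  obtain s where s: "{w, s} \<in> T \<and> \<not> reach (T - {{w, s}}) w u" using toward_ex[OF assms] by blast
  have "toward w u = s" unfolding toward_def
  proof (rule the_equality)
    show "{w, s} \<in> T \<and> \<not> reach (T - {{w, s}}) w u" using s .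
  next
    fix s' assume "{w, s'} \<in> T \<and> \<not> reach (T - {{w, s'}}) w u"
    then show "s' = s" using toward_uniq[OF assms] s by blast
  qed
  then show "{w, toward w u} \<in> T" "\<not> reach (T - {{w, toward w u}}) w u" using s by auto
qed

lemma toward_eq:
  assumes "w \<in> V" "u \<in> V" "w \<noteq> u" "{w, s} \<in> T" "\<not> reach (T - {{w, s}}) w u"
  shows "toward w u = s"
  using toward_uniq[OF assms(1-3) toward[OF assms(1-3)] assms(4,5)] .

lemma toward_side:
  assumes "w \<in> V" "u \<in> V" "w \<noteq> u"
  shows "reach (T - {{w, toward w u}}) (toward w u) u"
  using cut_other[OF toward(1)[OF assms] assms(2) toward(2)[OF assms]] .

end

lemma exchange:
  assumes tr: "tree_on V T" and pq: "{p, q} \<in> T" and ab: "a \<in> V" "b \<in> V" "a \<noteq> b"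
    and sep: "\<not> reach (T - {{p, q}}) a b"
  shows "tree_on V (insert {a, b} (T - {{p, q}}))"
proof -
  interpret tree_on V T by (rule tr)
  let ?F = "T - {{p, q}}"
  let ?T' = "insert {a, b} ?F"
  have abF: "{a, b} \<notin> ?F"
  proof
    assume "{a, b} \<in> ?F" then have "reach ?F a b" by (rule reach_edge)
    then show False using sep by simp
  qed
  have sg: "simple_graph V ?T'"
    unfolding simple_graph_def
  proof (intro conjI ballI)
    show "finite V" using fin .
  next
    fix e assume "e \<in> ?T'"
    then consider "e = {a, b}" | "e \<in> T" by blast
    then show "\<exists>u v. e = {u, v} \<and> u \<noteq> v \<and> u \<in> V \<and> v \<in> V"
    proof cases
      case 1 then show ?thesis using ab by blast
    next
      case 2 then show ?thesis using edge by blast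
    qed
  qed
  have subF: "?F \<subseteq> ?T'" by blast
  have abT: "reach ?T' a b" by (rule reach_edge) simp
  have pq': "reach ?T' p q"
  proof -
    consider "reach ?F p a" | "reach ?F q a" using cut[OF pq ab(1)] by blast
    then show ?thesis
    proof cases
      case 1
      have "\<not> reach ?F p b"
      proof
        assume "reach ?F p b"
        then have "reach ?F a b" using reach_trans[OF reach_sym[OF 1]] by simp
        then show False using sep by simp
      qed
      then have qb: "reach ?F q b" using cut[OF pq ab(2)] by blast
      have x1: "reach ?T' p a" using reach_mono[OF subF 1] .
      have x2: "reach ?T' b q" using reach_sym[OF reach_mono[OF subF qb]] .
      show ?thesis using reach_trans[OF reach_trans[OF x1 abT] x2] .
    next
      case 2
      have "\<not> reach ?F q b"
      proof
        assume "reach ?F q b"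
        then have "reach ?F a b" using reach_trans[OF reach_sym[OF 2]] by simp
        then show False using sep by simp
      qed
      then have pb: "reach ?F p b" using cut[OF pq ab(2)] by blast
      have x1: "reach ?T' q a" using reach_mono[OF subF 2] .
      have x2: "reach ?T' b p" using reach_sym[OF reach_mono[OF subF pb]] .
      show ?thesis using reach_sym[OF reach_trans[OF reach_trans[OF x1 abT] x2]] .
    qed
  qed
  have conn': "reach ?T' p x" if xV: "x \<in> V" for x
  proof -
    consider "reach ?F p x" | "reach ?F q x" using cut[OF pq xV] by blast
    then show "reach ?T' p x"
    proof cases
      case 1 show ?thesis using reach_mono[OF subF 1] .
    next
      case 2 show ?thesis using reach_trans[OF pq' reach_mono[OF subF 2]] .
    qed
  qed
  have "\<forall>u\<in>V. \<forall>v\<in>V. reach ?T' u v"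
  proof (intro ballI)
    fix u v assume "u \<in> V" "v \<in> V"
    then show "reach ?T' u v" using reach_trans[OF reach_sym[OF conn'] conn'] by blast
  qed
  then have cg: "connected_graph V ?T'"
    unfolding connected_reach using V_ne by blast
  have ac: "acyclic_graph ?T'"
    unfolding acyclic_reach
  proof (intro allI impI)
    fix u v assume uv: "{u, v} \<in> ?T'"
    show "\<not> reach (?T' - {{u, v}}) u v"
    proof (cases "{u, v} = {a, b}")
      case True
      then have eq: "?T' - {{u, v}} = ?F" using abF by auto
      have "(u = a \<and> v = b) \<or> (u = b \<and> v = a)" using True by (auto simp: doubleton_eq_iff)
      then show ?thesis
      proof
        assume "u = a \<and> v = b" then show ?thesis using eq sep by simp
      next
        assume h: "u = b \<and> v = a"
        show ?thesis
        proof
          assume "reach (?T' - {{u, v}}) u v"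
          then have "reach ?F b a" using eq h by simp
          then have "reach ?F a b" by (rule reach_sym)
          then show False using sep by simp
        qed
      qed
    next
      case False
      then have uvF: "{u, v} \<in> ?F" using uv by simp
      have eq: "?T' - {{u, v}} = insert {a, b} (?F - {{u, v}})" using False by auto
      show ?thesis
      proof
        assume "reach (?T' - {{u, v}}) u v"
        then have "reach (insert {a, b} (?F - {{u, v}})) u v" using eq by simp
        then have c: "reach (?F - {{u, v}}) u v \<or> (reach (?F - {{u, v}}) u a \<and> reach (?F - {{u, v}}) b v)
            \<or> (reach (?F - {{u, v}}) u b \<and> reach (?F - {{u, v}}) a v)" by (rule reach_insert)
        have s1: "?F - {{u, v}} \<subseteq> T - {{u, v}}" by blast
        have s2: "?F - {{u, v}} \<subseteq> ?F" by blast
        have uvT: "{u, v} \<in> T" using uvF by simp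
        have ruv: "reach ?F u v" using reach_edge[OF uvF] .
        from c show False
        proof (elim disjE conjE)
          assume "reach (?F - {{u, v}}) u v"
          then have "reach (T - {{u, v}}) u v" by (rule reach_mono[OF s1])
          then show False using bridge[OF uvT] by simp
        next
          assume h: "reach (?F - {{u, v}}) u a" "reach (?F - {{u, v}}) b v"
          have au: "reach ?F a u" using reach_sym[OF reach_mono[OF s2 h(1)]] .
          have vb: "reach ?F v b" using reach_sym[OF reach_mono[OF s2 h(2)]] .
          have "reach ?F a b" using reach_trans[OF reach_trans[OF au ruv] vb] .
          then show False using sep by simp
        next
          assume h: "reach (?F - {{u, v}}) u b" "reach (?F - {{u, v}}) a v"
          have bu: "reach ?F b u" using reach_sym[OF reach_mono[OF s2 h(1)]] .
          have va: "reach ?F v a" using reach_sym[OF reach_mono[OF s2 h(2)]] .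
          have "reach ?F b a" using reach_trans[OF reach_trans[OF bu ruv] va] .
          then have "reach ?F a b" by (rule reach_sym)
          then show False using sep by simp
        qed
      qed
    qed
  qed
  show ?thesis unfolding tree_on_def is_tree_def using sg cg ac by blast
qed




definition wgt :: "nat \<Rightarrow> int" where "wgt d = (if d = 1 \<or> 3 \<le> d then 1 else 0)"

definition cost :: "'a set \<Rightarrow> 'a set set \<Rightarrow> nat" where
  "cost V T = card (leaves V T) + card (branch_vertices V T)"

lemma wgt_simps: "wgt 0 = 0" "wgt 1 = 1" "wgt 2 = 0" "3 \<le> d \<Longrightarrow> wgt d = 1" "wgt d \<le> 1" "0 \<le> wgt d"
  by (auto simp: wgt_def)

lemma cost_sum:
  assumes "finite V"
  shows "int (cost V T) = (\<Sum>x\<in>V. wgt (degree T x))"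
proof -
  have l: "int (card (leaves V T)) = (\<Sum>x\<in>V. if degree T x = 1 then 1 else 0)"
  proof -
    have "int (card (leaves V T)) = (\<Sum>x\<in>leaves V T. 1)" by simp
    also have "\<dots> = (\<Sum>x\<in>V. if degree T x = 1 then 1 else 0)"
      unfolding leaves_def using sum.inter_filter[OF assms, of "\<lambda>x. (1::int)" "\<lambda>x. degree T x = 1"] by simp
    finally show ?thesis .
  qed
  have b: "int (card (branch_vertices V T)) = (\<Sum>x\<in>V. if degree T x \<ge> 3 then 1 else 0)"
  proof -
    have "int (card (branch_vertices V T)) = (\<Sum>x\<in>branch_vertices V T. 1)" by simp
    also have "\<dots> = (\<Sum>x\<in>V. if degree T x \<ge> 3 then 1 else 0)"
      unfolding branch_vertices_def using sum.inter_filter[OF assms, of "\<lambda>x. (1::int)" "\<lambda>x. degree T x \<ge> 3"] by simp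
    finally show ?thesis .
  qed
  have "int (cost V T) = (\<Sum>x\<in>V. if degree T x = 1 then 1 else 0) + (\<Sum>x\<in>V. if degree T x \<ge> 3 then 1 else 0)"
    unfolding cost_def using l b by simp
  also have "\<dots> = (\<Sum>x\<in>V. (if degree T x = 1 then 1 else 0) + (if degree T x \<ge> 3 then 1 else 0))"
    by (simp add: sum.distrib)
  also have "\<dots> = (\<Sum>x\<in>V. wgt (degree T x))"
    by (rule sum.cong) (auto simp: wgt_def)
  finally show ?thesis .
qed

lemma pair_set: "a \<noteq> b \<Longrightarrow> {y. {x, y} = {a, b}} = (if x = a then {b} else if x = b then {a} else {})"
  by (auto simp: doubleton_eq_iff)

lemma exch_degree:
  assumes fin: "finite (neighbours T x)" and pq: "{p, q} \<in> T" "p \<noteq> q" and ab: "{a, b} \<notin> T" "a \<noteq> b"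
  shows "degree (insert {a, b} (T - {{p, q}})) x + (if x = p \<or> x = q then 1 else 0)
       = degree T x + (if x = a \<or> x = b then 1 else 0)"
proof -
  let ?N = "neighbours T x"
  let ?A = "{y. {x, y} = {a, b}}"
  let ?D = "{y. {x, y} = {p, q}}"
  have N': "neighbours (insert {a, b} (T - {{p, q}})) x = ?A \<union> (?N - ?D)"
    unfolding neighbours_def by auto
  have DN: "?D \<subseteq> ?N" using pq unfolding neighbours_def by auto
  have AN: "?A \<inter> ?N = {}" using ab unfolding neighbours_def by auto
  have finA: "finite ?A" using pair_set[OF ab(2)] by simp
  have finD: "finite ?D" using pair_set[OF pq(2)] by simp
  have cA: "card ?A = (if x = a \<or> x = b then 1 else 0)" using pair_set[OF ab(2), of x] ab(2) by auto
  have cD: "card ?D = (if x = p \<or> x = q then 1 else 0)" using pair_set[OF pq(2), of x] pq(2) by auto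
  have "card (?A \<union> (?N - ?D)) = card ?A + card (?N - ?D)"
    by (rule card_Un_disjoint) (use finA fin AN in auto)
  moreover have "card (?N - ?D) + card ?D = card ?N"
    using card_Diff_subset[OF finD DN] card_mono[OF fin DN] by simp
  ultimately show ?thesis unfolding degree_def N' using cA cD by simp
qed

lemma exch_cost:
  assumes tr: "tree_on V T" and pq: "{p, q} \<in> T" and ab: "{a, b} \<notin> T" "a \<noteq> b" "a \<in> V" "b \<in> V"
  shows "int (cost V (insert {a, b} (T - {{p, q}}))) = int (cost V T)
     + (\<Sum>x\<in>{a, b, p, q}. wgt (degree (insert {a, b} (T - {{p, q}})) x) - wgt (degree T x))"
proof -
  interpret tree_on V T by (rule tr)
  let ?T' = "insert {a, b} (T - {{p, q}})"
  have pqV: "p \<in> V" "q \<in> V" "p \<noteq> q" using edge_V[OF pq] by auto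
  have X: "{a, b, p, q} \<subseteq> V" using ab pqV by auto
  have same: "degree ?T' x = degree T x" if "x \<notin> {a, b, p, q}" for x
    using exch_degree[OF nbr_fin pq pqV(3) ab(1,2), of x] that by auto
  have "(\<Sum>x\<in>V. wgt (degree ?T' x)) = (\<Sum>x\<in>V. wgt (degree T x)) + (\<Sum>x\<in>V. wgt (degree ?T' x) - wgt (degree T x))"
    by (simp add: sum_subtractf)
  also have "(\<Sum>x\<in>V. wgt (degree ?T' x) - wgt (degree T x)) = (\<Sum>x\<in>{a, b, p, q}. wgt (degree ?T' x) - wgt (degree T x))"
    by (rule sum.mono_neutral_right[OF fin X]) (use same in auto)
  finally show ?thesis using cost_sum[OF fin] by simp
qed

lemma finite_edges: "simple_graph V E \<Longrightarrow> finite E"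
proof -
  assume sg: "simple_graph V E"
  have s: "finite V" "\<forall>e\<in>E. \<exists>u v. e = {u, v} \<and> u \<noteq> v \<and> u \<in> V \<and> v \<in> V"
    using sg[unfolded simple_graph_def] by auto
  have "E \<subseteq> Pow V"
  proof
    fix e assume "e \<in> E"
    then obtain u v where "e = {u, v}" "u \<in> V" "v \<in> V" using s(2) by blast
    then show "e \<in> Pow V" by simp
  qed
  moreover have "finite V" using s(1) .
  ultimately show "finite E" using finite_subset by blast
qed

lemma span_exists:
  assumes sg: "simple_graph V E" and cg: "connected_graph V E"
  shows "\<exists>T. spanning_tree V E T"
proof -
  have finE: "finite E" using finite_edges[OF sg] .
  have ex: "\<exists>F. (F \<subseteq> E \<and> connected_graph V F) \<and> (\<forall>G. G \<subseteq> E \<and> connected_graph V G \<longrightarrow> card F \<le> card G)"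
    by (rule ex_has_least_nat[of "\<lambda>G. G \<subseteq> E \<and> connected_graph V G" E card]) (simp add: cg)
  then obtain F where F: "F \<subseteq> E" "connected_graph V F" and min: "\<And>G. G \<subseteq> E \<Longrightarrow> connected_graph V G \<Longrightarrow> card F \<le> card G"
    by blast
  have sgF: "simple_graph V F" using sg[unfolded simple_graph_def] F(1) unfolding simple_graph_def by blast
  have acF: "acyclic_graph F"
    unfolding acyclic_reach
  proof (intro allI impI notI)
    fix u v assume uv: "{u, v} \<in> F" and r: "reach (F - {{u, v}}) u v"
    have "\<forall>x\<in>V. \<forall>y\<in>V. reach (F - {{u, v}}) x y"
    proof (intro ballI)
      fix x y assume "x \<in> V" "y \<in> V"
      then have "reach F x y" using F(2)[unfolded connected_reach] by blast
      then show "reach (F - {{u, v}}) x y" using reach_del_edge[OF _ r] by simp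
    qed
    moreover have "V \<noteq> {}" using F(2)[unfolded connected_reach] by simp
    ultimately have "connected_graph V (F - {{u, v}})"
      unfolding connected_reach by simp
    then have "card F \<le> card (F - {{u, v}})" using min F(1) by blast
    moreover have "finite F" using F(1) finE finite_subset by blast
    ultimately show False using uv card_Diff1_less[of F "{u, v}"] by simp
  qed
  show ?thesis unfolding spanning_tree_def is_tree_def using F sgF acF by blast
qed




context tree_on
begin

lemma side_fin: "finite {x. reach (T - {{p, q}}) p x}"
proof -
  have "{x. reach (T - {{p, q}}) p x} \<subseteq> insert p V"
  proof
    fix x assume "x \<in> {x. reach (T - {{p, q}}) p x}"
    then have r: "reach (T - {{p, q}}) p x" by simp
    show "x \<in> insert p V"
    proof (cases "x = p")
      case True then show ?thesis by simp
    next
      case False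
      have px: "p \<noteq> x" using False by simp
      obtain s where "{p, s} \<in> T - {{p, q}}" using reach_first_step[OF r px] by blast
      then have "p \<in> V" using edge_V by blast
      then show ?thesis using reach_V[OF r _ \<open>p \<in> V\<close>] by blast
    qed
  qed
  then show ?thesis using fin finite_subset by blast
qed

lemma side_step:
  assumes pq: "{p, q} \<in> T" and pr: "{p, r} \<in> T" and rq: "r \<noteq> q"
  shows "reach (T - {{p, r}}) r x \<Longrightarrow> reach (T - {{p, q}}) p x" "\<not> reach (T - {{p, r}}) r p"
proof -
  show np: "\<not> reach (T - {{p, r}}) r p" using bridge'[OF pr] .
  assume h: "reach (T - {{p, r}}) r x"
  have nz: "\<And>w. reach (T - {{p, r}}) r w \<Longrightarrow> w \<noteq> p" using np by blast
  have a: "reach {f\<in>T - {{p, r}}. p \<notin> f} r x" using reach_avoid[OF h nz] .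
  have sub: "{f\<in>T - {{p, r}}. p \<notin> f} \<subseteq> T - {{p, q}}" by blast
  have b: "reach (T - {{p, q}}) r x" using reach_mono[OF sub a] .
  have "{p, r} \<in> T - {{p, q}}" using pr rq by (auto simp: doubleton_eq_iff)
  then have "reach (T - {{p, q}}) p r" by (rule reach_edge)
  then show "reach (T - {{p, q}}) p x" using reach_trans b by fast
qed

lemma side_decomp:
  assumes pq: "{p, q} \<in> T" and h: "reach (T - {{p, q}}) p x" and xp: "x \<noteq> p"
  shows "\<exists>r. {p, r} \<in> T \<and> r \<noteq> q \<and> reach (T - {{p, r}}) r x"
proof -
  obtain s where s1: "{p, s} \<in> T - {{p, q}}" and s2: "reach {f\<in>T - {{p, q}}. p \<notin> f} s x"
    using reach_first_step[OF h xp[symmetric]] by blast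
  have sq: "s \<noteq> q" using s1 by auto
  have sub: "{f\<in>T - {{p, q}}. p \<notin> f} \<subseteq> T - {{p, s}}" by blast
  have "reach (T - {{p, s}}) s x" using reach_mono[OF sub s2] .
  then show ?thesis using s1 sq by blast
qed

lemma deg_pos:
  assumes "x \<in> V" "y \<in> V" "x \<noteq> y"
  shows "1 \<le> degree T x"
proof -
  obtain s where "{x, s} \<in> T" using reach_first_step[OF conn[OF assms(1,2)] assms(3)] by blast
  then have "s \<in> neighbours T x" by (simp add: in_nbr)
  then have "neighbours T x \<noteq> {}" by blast
  then show ?thesis unfolding degree_def using nbr_fin by (simp add: Suc_leI card_gt_0_iff)
qed

lemma unique_leaf_aux:
  "n = card {x. reach (T - {{p, q}}) p x} \<Longrightarrow> {p, q} \<in> T \<Longrightarrow>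
   (\<forall>x. reach (T - {{p, q}}) p x \<longrightarrow> degree T x \<le> 2) \<Longrightarrow>
   \<exists>l. reach (T - {{p, q}}) p l \<and> degree T l = 1 \<and>
       (\<forall>x. reach (T - {{p, q}}) p x \<longrightarrow> degree T x = 1 \<longrightarrow> x = l)"
proof (induction n arbitrary: p q rule: less_induct)
  case (less n)
  have pq: "{p, q} \<in> T" using less.prems(2) .
  have qN: "q \<in> neighbours T p" using pq by (simp add: in_nbr)
  have d1: "1 \<le> degree T p" using qN nbr_fin unfolding degree_def
    by (metis One_nat_def Suc_leI card_gt_0_iff empty_iff)
  have d2: "degree T p \<le> 2" using less.prems(3) by simp
  show ?case
  proof (cases "degree T p = 1")
    case True
    then have Np: "neighbours T p = {q}" using qN unfolding degree_def
      by (metis card_1_singletonE singletonD)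
    have only: "x = p" if hx: "reach (T - {{p, q}}) p x" for x
    proof (rule ccontr)
      assume "x \<noteq> p"
      then obtain r where "{p, r} \<in> T" "r \<noteq> q" using side_decomp[OF pq hx] by blast
      then have "r \<in> neighbours T p" by (simp add: in_nbr)
      then show False using Np \<open>r \<noteq> q\<close> by blast
    qed
    show ?thesis using True only by (intro exI[of _ p]) auto
  next
    case False
    then have dp: "degree T p = 2" using d1 d2 by simp
    have "card (neighbours T p - {q}) = 1" using dp qN nbr_fin unfolding degree_def by simp
    then obtain r where Nr: "neighbours T p - {q} = {r}" by (metis card_1_singletonE)
    then have "r \<in> neighbours T p - {q}" by simp
    then have pr: "{p, r} \<in> T" and rq: "r \<noteq> q" by (simp_all add: in_nbr)
    have rN: "r' = r" if "{p, r'} \<in> T" "r' \<noteq> q" for r'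
    proof -
      have "r' \<in> neighbours T p - {q}" using that by (simp add: in_nbr)
      then show ?thesis using Nr by simp
    qed
    let ?S = "{x. reach (T - {{p, q}}) p x}"
    let ?S' = "{x. reach (T - {{p, r}}) r x}"
    have sub: "?S' \<subseteq> ?S" using side_step(1)[OF pq pr rq] by blast
    have pS: "p \<in> ?S" by simp
    have pS': "p \<notin> ?S'" using side_step(2)[OF pq pr rq] by simp
    have lt: "card ?S' < n" using less.prems(1) psubset_card_mono[OF side_fin] sub pS pS' by blast
    have bl: "\<forall>x. reach (T - {{p, r}}) r x \<longrightarrow> degree T x \<le> 2" using sub less.prems(3) by blast
    have eqs: "T - {{r, p}} = T - {{p, r}}" by (simp add: insert_commute)
    have rp: "{r, p} \<in> T" using pr by (simp add: insert_commute)
    have lt': "card {x. reach (T - {{r, p}}) r x} < n" using lt eqs by simp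
    have bl': "\<forall>x. reach (T - {{r, p}}) r x \<longrightarrow> degree T x \<le> 2" using bl eqs by simp
    obtain l where l1: "reach (T - {{p, r}}) r l" and l2: "degree T l = 1"
      and l3: "\<forall>x. reach (T - {{p, r}}) r x \<longrightarrow> degree T x = 1 \<longrightarrow> x = l"
      using less.IH[OF lt' refl rp bl'] eqs by auto
    have "reach (T - {{p, q}}) p l" using side_step(1)[OF pq pr rq l1] .
    moreover have "x = l" if hx: "reach (T - {{p, q}}) p x" and hd: "degree T x = 1" for x
    proof -
      have "x \<noteq> p" using hd dp by auto
      then obtain r' where "{p, r'} \<in> T" "r' \<noteq> q" "reach (T - {{p, r'}}) r' x"
        using side_decomp[OF pq hx] by blast
      then have "reach (T - {{p, r}}) r x" using rN by blast
      then show "x = l" using l3 hd by blast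
    qed
    ultimately show ?thesis using l2 by blast
  qed
qed

lemma unique_leaf:
  assumes "{p, q} \<in> T" "\<And>x. reach (T - {{p, q}}) p x \<Longrightarrow> degree T x \<le> 2"
  shows "\<exists>l. reach (T - {{p, q}}) p l \<and> degree T l = 1 \<and>
       (\<forall>x. reach (T - {{p, q}}) p x \<longrightarrow> degree T x = 1 \<longrightarrow> x = l)"
proof -
  have "\<forall>x. reach (T - {{p, q}}) p x \<longrightarrow> degree T x \<le> 2" using assms(2) by simp
  then show ?thesis by (rule unique_leaf_aux[OF refl assms(1)])
qed

lemma leaves_le2:
  assumes "\<forall>x\<in>V. degree T x \<le> 2"
  shows "card (leaves V T) \<le> 2"
proof (cases "T = {}")
  case True
  then have "leaves V T = {}" unfolding leaves_def degree_def neighbours_def by simp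
  then show ?thesis by simp
next
  case False
  then obtain e where "e \<in> T" by blast
  then obtain p q where pq: "{p, q} \<in> T" using edge by blast
  have qp: "{q, p} \<in> T" using pq by (simp add: insert_commute)
  have bl1: "\<And>x. reach (T - {{p, q}}) p x \<Longrightarrow> degree T x \<le> 2"
    using assms reach_V edge_V(1)[OF pq] by blast
  have bl2: "\<And>x. reach (T - {{q, p}}) q x \<Longrightarrow> degree T x \<le> 2"
    using assms reach_V edge_V(2)[OF pq] by blast
  obtain l1 where l1: "\<forall>x. reach (T - {{p, q}}) p x \<longrightarrow> degree T x = 1 \<longrightarrow> x = l1"
    using unique_leaf[OF pq bl1] by blast
  obtain l2 where l2: "\<forall>x. reach (T - {{q, p}}) q x \<longrightarrow> degree T x = 1 \<longrightarrow> x = l2"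
    using unique_leaf[OF qp bl2] by blast
  have "leaves V T \<subseteq> {l1, l2}"
  proof
    fix x assume "x \<in> leaves V T"
    then have xV: "x \<in> V" and dx: "degree T x = 1" unfolding leaves_def by auto
    from cut[OF pq xV] show "x \<in> {l1, l2}"
    proof
      assume "reach (T - {{p, q}}) p x" then show ?thesis using l1 dx by blast
    next
      assume "reach (T - {{p, q}}) q x"
      then have "reach (T - {{q, p}}) q x" by (simp add: insert_commute)
      then show ?thesis using l2 dx by blast
    qed
  qed
  then have "card (leaves V T) \<le> card {l1, l2}" by (rule card_mono[rotated]) simp
  also have "\<dots> \<le> 2" by (simp add: card_insert_if)
  finally show ?thesis .
qed

lemma end_branch:
  assumes "\<exists>z\<in>V. 3 \<le> degree T z"
  shows "\<exists>z c. z \<in> V \<and> 3 \<le> degree T z \<and> {z, c} \<in> T \<and>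
     (\<forall>y\<in>V. 3 \<le> degree T y \<longrightarrow> y \<noteq> z \<longrightarrow> reach (T - {{z, c}}) c y)"
proof -
  let ?P = "\<lambda>(z, c). z \<in> V \<and> 3 \<le> degree T z \<and> {z, c} \<in> T"
  let ?m = "\<lambda>(z, c). card {x. reach (T - {{z, c}}) z x}"
  obtain z0 where z0: "z0 \<in> V" "3 \<le> degree T z0" using assms by blast
  then have "neighbours T z0 \<noteq> {}" unfolding degree_def by auto
  then obtain c0 where "{z0, c0} \<in> T" by (auto simp: in_nbr)
  then have "?P (z0, c0)" using z0 by simp
  then obtain zc where P: "?P zc" and min: "\<And>y. ?P y \<Longrightarrow> ?m zc \<le> ?m y"
    using ex_has_least_nat[of ?P "(z0, c0)" ?m] by blast
  obtain z c where zc: "zc = (z, c)" by (cases zc)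
  have zV: "z \<in> V" and dz: "3 \<le> degree T z" and e: "{z, c} \<in> T" using P zc by auto
  have "reach (T - {{z, c}}) c y" if yV: "y \<in> V" and dy: "3 \<le> degree T y" and yz: "y \<noteq> z" for y
  proof (rule ccontr)
    assume nc: "\<not> reach (T - {{z, c}}) c y"
    then have zy: "reach (T - {{z, c}}) z y" using cut[OF e yV] by blast
    let ?t = "toward y z"
    have yt: "{y, ?t} \<in> T" and nyz: "\<not> reach (T - {{y, ?t}}) y z" using toward[OF yV zV yz] by auto
    have Pyt: "?P (y, ?t)" using yV dy yt by simp
    let ?A = "{x. reach (T - {{y, ?t}}) y x}"
    let ?B = "{x. reach (T - {{z, c}}) z x}"
    have sub: "?A \<subseteq> ?B"
    proof
      fix x assume "x \<in> ?A"
      then have h: "reach (T - {{y, ?t}}) y x" by simp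
      have nz: "\<And>w. reach (T - {{y, ?t}}) y w \<Longrightarrow> w \<noteq> z" using nyz by blast
      have a: "reach {f\<in>T - {{y, ?t}}. z \<notin> f} y x" using reach_avoid[OF h nz] .
      have s: "{f\<in>T - {{y, ?t}}. z \<notin> f} \<subseteq> T - {{z, c}}" by blast
      have "reach (T - {{z, c}}) y x" using reach_mono[OF s a] .
      then show "x \<in> ?B" using reach_trans[OF zy] by simp
    qed
    have "z \<in> ?B" by simp
    moreover have "z \<notin> ?A" using nyz by simp
    ultimately have "card ?A < card ?B" using psubset_card_mono[OF side_fin] sub by blast
    moreover have "?m zc \<le> ?m (y, ?t)" using min[OF Pyt] .
    ultimately show False using zc by simp
  qed
  then show ?thesis using zV dz e by blast
qed

end




definition mincost :: "'a set \<Rightarrow> 'a set set \<Rightarrow> 'a set set \<Rightarrow> bool" where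
  "mincost V E T \<longleftrightarrow> spanning_tree V E T \<and> (\<forall>T'. spanning_tree V E T' \<longrightarrow> cost V T \<le> cost V T')"

lemma mincost_exists:
  assumes "simple_graph V E" "connected_graph V E"
  shows "\<exists>T. mincost V E T"
proof -
  obtain T0 where "spanning_tree V E T0" using span_exists[OF assms] by blast
  then have "\<exists>T. spanning_tree V E T \<and> (\<forall>T'. spanning_tree V E T' \<longrightarrow> cost V T \<le> cost V T')"
    by (rule ex_has_least_nat)
  then show ?thesis unfolding mincost_def by blast
qed

lemma mincost_tree: "mincost V E T \<Longrightarrow> tree_on V T"
  unfolding mincost_def spanning_tree_def tree_on_def by blast

lemma mincost_sub: "mincost V E T \<Longrightarrow> T \<subseteq> E"
  unfolding mincost_def spanning_tree_def by blast

lemma mincost_le: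
  assumes "mincost V E T" "tree_on V T'" "T' \<subseteq> E"
  shows "cost V T \<le> cost V T'"
  using assms unfolding mincost_def spanning_tree_def tree_on_def by blast

lemma mincost_eq:
  assumes "mincost V E T" "tree_on V T'" "T' \<subseteq> E" "cost V T' \<le> cost V T"
  shows "mincost V E T'"
proof -
  have st: "spanning_tree V E T'" using assms(2,3) unfolding spanning_tree_def tree_on_def by blast
  have "\<forall>T''. spanning_tree V E T'' \<longrightarrow> cost V T' \<le> cost V T''"
  proof (intro allI impI)
    fix T'' assume "spanning_tree V E T''"
    then have "cost V T \<le> cost V T''" using assms(1) unfolding mincost_def by blast
    then show "cost V T' \<le> cost V T''" using assms(4) by simp
  qed
  then show ?thesis unfolding mincost_def using st by blast
qed

lemma sg_edge: "simple_graph V E \<Longrightarrow> {x, y} \<in> E \<Longrightarrow> x \<in> V \<and> y \<in> V \<and> x \<noteq> y"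
proof -
  assume sg: "simple_graph V E" and e: "{x, y} \<in> E"
  then obtain u v where "{x, y} = {u, v}" "u \<noteq> v" "u \<in> V" "v \<in> V" unfolding simple_graph_def by blast
  then show ?thesis by (auto simp: doubleton_eq_iff)
qed

lemma wgt_one[simp]: "wgt (Suc 0) = 1" "wgt 0 = 0" "wgt 2 = 0"
  by (auto simp: wgt_def)

lemma wgt_drop_le: "wgt (d - 1) - wgt d \<le> 1"
  by (auto simp: wgt_def)

lemma wgt_drop_branch: "3 \<le> d \<Longrightarrow> wgt (d - 1) - wgt d \<le> 0"
  by (auto simp: wgt_def)

lemma across_leaf:
  assumes mc: "mincost V E T" and sg: "simple_graph V E"
    and v: "v \<in> V" "degree T v = 1" and z: "z \<in> V" "3 \<le> degree T z"
    and s: "s \<in> V" "degree T s = 1" "s \<noteq> z" and vz: "v \<noteq> z"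
    and sep: "\<not> reach (Tz T z) v s" and vs: "{v, s} \<in> E"
  shows False
proof -
  have trT: "tree_on V T" using mincost_tree[OF mc] .
  interpret tree_on V T by (rule trT)
  have zs: "z \<noteq> s" using s(3) by simp
  define r where "r = toward z s"
  have zr: "{z, r} \<in> T" and nzs: "\<not> reach (T - {{z, r}}) z s"
    using toward[OF z(1) s(1) zs] unfolding r_def by auto
  have rs: "reach (T - {{z, r}}) r s" using toward_side[OF z(1) s(1) zs] unfolding r_def .
  have rsz: "reach (Tz T z) r s" using side_Tz[OF zr] rs by blast
  have zv: "z \<noteq> v" using vz by simp
  define a where "a = toward z v"
  have za: "{z, a} \<in> T" using toward[OF z(1) v(1) zv] unfolding a_def by auto
  have av: "reach (T - {{z, a}}) a v" using toward_side[OF z(1) v(1) zv] unfolding a_def .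
  have avz: "reach (Tz T z) a v" using side_Tz[OF za] av by blast
  have ar: "a \<noteq> r"
  proof
    assume "a = r"
    then have "reach (Tz T z) a s" using rsz by simp
    then have "reach (Tz T z) v s" using reach_trans[OF reach_sym[OF avz]] by simp
    then show False using sep by simp
  qed
  have vr: "v \<noteq> r"
  proof
    assume "v = r" then show False using sep rsz by simp
  qed
  have h1: "reach (T - {{z, r}}) a v" using reach_mono[OF Tz_sub[OF zr] avz] .
  have h2: "{z, a} \<in> T - {{z, r}}" using za ar by (auto simp: doubleton_eq_iff)
  have zv': "reach (T - {{z, r}}) z v" using reach_trans[OF reach_edge[OF h2] h1] .
  have sep2: "\<not> reach (T - {{z, r}}) v s"
  proof
    assume "reach (T - {{z, r}}) v s"
    then have "reach (T - {{z, r}}) z s" using reach_trans[OF zv'] by simp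
    then show False using nzs by simp
  qed
  have vs_ne: "v \<noteq> s" using sep by auto
  have vsT: "{v, s} \<notin> T"
  proof
    assume h: "{v, s} \<in> T"
    have "{v, s} \<noteq> {z, r}" using vz vr by (auto simp: doubleton_eq_iff)
    then have "{v, s} \<in> T - {{z, r}}" using h by simp
    then have "reach (T - {{z, r}}) v s" by (rule reach_edge)
    then show False using sep2 by simp
  qed
  let ?T' = "insert {v, s} (T - {{z, r}})"
  have tr': "tree_on V ?T'" using exchange[OF trT zr v(1) s(1) vs_ne sep2] .
  have sub': "?T' \<subseteq> E" using mincost_sub[OF mc] vs by blast
  have le: "cost V T \<le> cost V ?T'" using mincost_le[OF mc tr' sub'] .
  have zrne: "z \<noteq> r" using edge_V[OF zr] by simp
  have dg: "\<And>x. degree ?T' x + (if x = z \<or> x = r then 1 else 0) = degree T x + (if x = v \<or> x = s then 1 else 0)"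
    using exch_degree[OF nbr_fin zr zrne vsT vs_ne] by blast
  have ec: "int (cost V ?T') = int (cost V T) + (\<Sum>x\<in>{v, s, z, r}. wgt (degree ?T' x) - wgt (degree T x))"
    using exch_cost[OF trT zr vsT vs_ne v(1) s(1)] .
  have dv: "degree ?T' v = 2" using dg[of v] v(2) vz vr by simp
  have dz: "degree ?T' z = degree T z - 1" using dg[of z] vz zs by simp
  have wz: "wgt (degree ?T' z) - wgt (degree T z) \<le> 0" using dz wgt_drop_branch[OF z(2)] by simp
  show False
  proof (cases "s = r")
    case True
    have ds: "degree ?T' s = degree T s" using dg[of s] True by simp
    have "(\<Sum>x\<in>{v, s, z, r}. wgt (degree ?T' x) - wgt (degree T x))
        = (wgt (degree ?T' v) - wgt (degree T v)) + (wgt (degree ?T' s) - wgt (degree T s))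
          + (wgt (degree ?T' z) - wgt (degree T z))"
      using True vs_ne vz zs by (simp add: insert_commute)
    also have "\<dots> \<le> -1" using dv v(2) ds wz by (simp add: wgt_simps)
    finally show False using ec le by linarith
  next
    case False
    have ds: "degree ?T' s = 2" using dg[of s] False zs s(2) by simp
    have dr: "degree ?T' r = degree T r - 1" using dg[of r] vr False by simp
    have wr: "wgt (degree ?T' r) - wgt (degree T r) \<le> 1" using dr wgt_drop_le by simp
    have "(\<Sum>x\<in>{v, s, z, r}. wgt (degree ?T' x) - wgt (degree T x))
        = (wgt (degree ?T' v) - wgt (degree T v)) + (wgt (degree ?T' s) - wgt (degree T s))
          + (wgt (degree ?T' z) - wgt (degree T z)) + (wgt (degree ?T' r) - wgt (degree T r))"
      using False vs_ne vz zs vr zrne by simp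
    also have "\<dots> \<le> -1" using dv v(2) ds s(2) wz wr by (simp add: wgt_simps)
    finally show False using ec le by linarith
  qed
qed


lemma wgt_drop_not2: "d \<noteq> 2 \<Longrightarrow> 1 \<le> d \<Longrightarrow> wgt (d - 1) - wgt d \<le> 0"
  by (auto simp: wgt_def)

lemma nbr_exch:
  assumes mc: "mincost V E T" and sg: "simple_graph V E"
    and u: "u \<in> V" "degree T u = 1" and uwE: "{u, w} \<in> E" and uwT: "{u, w} \<notin> T"
    and ws: "{w, s} \<in> T" and nws: "\<not> reach (T - {{w, s}}) w u"
  shows "degree T s = 2" "s \<noteq> u" "mincost V E (insert {u, w} (T - {{w, s}}))"
proof -
  have trT: "tree_on V T" using mincost_tree[OF mc] .
  interpret tree_on V T by (rule trT)
  have wV: "w \<in> V" and uw: "u \<noteq> w" using sg_edge[OF sg uwE] by auto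
  show su: "s \<noteq> u"
  proof
    assume "s = u" then have "{u, w} \<in> T" using ws by (simp add: insert_commute)
    then show False using uwT by simp
  qed
  have ws_ne: "w \<noteq> s" using edge_V[OF ws] by simp
  have sV: "s \<in> V" using edge_V[OF ws] by simp
  have sep: "\<not> reach (T - {{w, s}}) u w"
  proof
    assume "reach (T - {{w, s}}) u w"
    then have "reach (T - {{w, s}}) w u" by (rule reach_sym)
    then show False using nws by simp
  qed
  let ?T' = "insert {u, w} (T - {{w, s}})"
  have tr': "tree_on V ?T'" using exchange[OF trT ws u(1) wV uw sep] .
  have sub': "?T' \<subseteq> E" using mincost_sub[OF mc] uwE by blast
  have le: "cost V T \<le> cost V ?T'" using mincost_le[OF mc tr' sub'] .
  have dg: "\<And>x. degree ?T' x + (if x = w \<or> x = s then 1 else 0) = degree T x + (if x = u \<or> x = w then 1 else 0)"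
    using exch_degree[OF nbr_fin ws ws_ne uwT uw] by blast
  have ec: "int (cost V ?T') = int (cost V T) + (\<Sum>x\<in>{u, w, w, s}. wgt (degree ?T' x) - wgt (degree T x))"
    using exch_cost[OF trT ws uwT uw u(1) wV] .
  have du: "degree ?T' u = 2" using dg[of u] u(2) uw su by simp
  have dw: "degree ?T' w = degree T w" using dg[of w] by simp
  have dsx: "degree ?T' s = degree T s - 1" using dg[of s] su ws_ne by simp
  have ds1: "1 \<le> degree T s"
    using deg_pos[OF sV wV ws_ne[symmetric]] .
  have sum: "(\<Sum>x\<in>{u, w, w, s}. wgt (degree ?T' x) - wgt (degree T x))
        = (wgt (degree ?T' u) - wgt (degree T u)) + (wgt (degree ?T' w) - wgt (degree T w))
          + (wgt (degree ?T' s) - wgt (degree T s))"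
    using uw su ws_ne by simp
  show d2: "degree T s = 2"
  proof (rule ccontr)
    assume "degree T s \<noteq> 2"
    then have "wgt (degree ?T' s) - wgt (degree T s) \<le> 0" using dsx wgt_drop_not2 ds1 by simp
    then have "(\<Sum>x\<in>{u, w, w, s}. wgt (degree ?T' x) - wgt (degree T x)) \<le> -1"
      using sum du u(2) dw by simp
    then show False using ec le by linarith
  qed
  have "(\<Sum>x\<in>{u, w, w, s}. wgt (degree ?T' x) - wgt (degree T x)) = 0"
    using sum du u(2) dw dsx d2 by simp
  then have "cost V ?T' \<le> cost V T" using ec by linarith
  then show "mincost V E ?T'" using mincost_eq[OF mc tr' sub'] by blast
qed

lemma branch_exch:
  assumes mc: "mincost V E T" and sg: "simple_graph V E"
    and v: "v \<in> V" "degree T v = 1" and z: "z \<in> V" "3 \<le> degree T z" and zc: "{z, c} \<in> T"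
    and x: "x \<in> V" "3 \<le> degree T x" "x \<noteq> z" and vz: "v \<noteq> z"
    and cx: "reach (T - {{z, c}}) c x" and ncv: "\<not> reach (Tz T z) c v" and vx: "{v, x} \<in> E"
  shows "4 \<le> degree T z" "mincost V E (insert {v, x} (T - {{z, c}}))"
    "degree (insert {v, x} (T - {{z, c}})) z + 1 = degree T z"
    "\<And>y. 3 \<le> degree (insert {v, x} (T - {{z, c}})) y \<Longrightarrow> 3 \<le> degree T y"
proof -
  have trT: "tree_on V T" using mincost_tree[OF mc] .
  interpret tree_on V T by (rule trT)
  have zv: "z \<noteq> v" using vz by simp
  define a where "a = toward z v"
  have za: "{z, a} \<in> T" using toward[OF z(1) v(1) zv] unfolding a_def by auto
  have av: "reach (T - {{z, a}}) a v" using toward_side[OF z(1) v(1) zv] unfolding a_def .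
  have avz: "reach (Tz T z) a v" using side_Tz[OF za] av by blast
  have ac: "a \<noteq> c"
  proof
    assume "a = c" then show False using avz ncv by simp
  qed
  have vc: "v \<noteq> c"
  proof
    assume "v = c" then show False using ncv by simp
  qed
  have h1: "reach (T - {{z, c}}) a v" using reach_mono[OF Tz_sub[OF zc] avz] .
  have h2: "{z, a} \<in> T - {{z, c}}" using za ac by (auto simp: doubleton_eq_iff)
  have zv': "reach (T - {{z, c}}) z v" using reach_trans[OF reach_edge[OF h2] h1] .
  have sep: "\<not> reach (T - {{z, c}}) v x"
  proof
    assume "reach (T - {{z, c}}) v x"
    then have "reach (T - {{z, c}}) z x" using reach_trans[OF zv'] by simp
    then have "reach (T - {{z, c}}) z c" using reach_trans[OF _ reach_sym[OF cx]] by simp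
    then show False using bridge[OF zc] by simp
  qed
  have vx_ne: "v \<noteq> x" using sep by auto
  have vxT: "{v, x} \<notin> T"
  proof
    assume h: "{v, x} \<in> T"
    have "{v, x} \<noteq> {z, c}" using vz vc by (auto simp: doubleton_eq_iff)
    then have "{v, x} \<in> T - {{z, c}}" using h by simp
    then have "reach (T - {{z, c}}) v x" by (rule reach_edge)
    then show False using sep by simp
  qed
  let ?T' = "insert {v, x} (T - {{z, c}})"
  have tr': "tree_on V ?T'" using exchange[OF trT zc v(1) x(1) vx_ne sep] .
  have sub': "?T' \<subseteq> E" using mincost_sub[OF mc] vx by blast
  have le: "cost V T \<le> cost V ?T'" using mincost_le[OF mc tr' sub'] .
  have zcne: "z \<noteq> c" using edge_V[OF zc] by simp
  have dg: "\<And>y. degree ?T' y + (if y = z \<or> y = c then 1 else 0) = degree T y + (if y = v \<or> y = x then 1 else 0)"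
    using exch_degree[OF nbr_fin zc zcne vxT vx_ne] by blast
  have ec: "int (cost V ?T') = int (cost V T) + (\<Sum>y\<in>{v, x, z, c}. wgt (degree ?T' y) - wgt (degree T y))"
    using exch_cost[OF trT zc vxT vx_ne v(1) x(1)] .
  have dv: "degree ?T' v = 2" using dg[of v] v(2) vz vc by simp
  have dz: "degree ?T' z = degree T z - 1" using dg[of z] vz x(3) by simp
  show dz1: "degree ?T' z + 1 = degree T z" using dz z(2) by simp
  have xc: "x \<noteq> c"
  proof
    assume xc: "x = c"
    have dx: "degree ?T' x = degree T x" using dg[of x] xc by simp
    have "(\<Sum>y\<in>{v, x, z, c}. wgt (degree ?T' y) - wgt (degree T y))
        = (wgt (degree ?T' v) - wgt (degree T v)) + (wgt (degree ?T' x) - wgt (degree T x))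
          + (wgt (degree ?T' z) - wgt (degree T z))"
      using xc vx_ne vz x(3) by (simp add: insert_commute)
    also have "\<dots> \<le> -1" using dv v(2) dx dz wgt_drop_branch[OF z(2)] by simp
    finally show False using ec le by linarith
  qed
  have dx: "degree ?T' x = degree T x + 1" using dg[of x] xc x(3) by simp
  have dc: "degree ?T' c = degree T c - 1" using dg[of c] vc xc by simp
  have wx: "wgt (degree ?T' x) = wgt (degree T x)" using dx x(2) by (simp add: wgt_def)
  have wc: "wgt (degree ?T' c) - wgt (degree T c) \<le> 1" using dc wgt_drop_le by simp
  have sum: "(\<Sum>y\<in>{v, x, z, c}. wgt (degree ?T' y) - wgt (degree T y))
        = (wgt (degree ?T' v) - wgt (degree T v)) + (wgt (degree ?T' x) - wgt (degree T x))
          + (wgt (degree ?T' z) - wgt (degree T z)) + (wgt (degree ?T' c) - wgt (degree T c))"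
    using xc vx_ne vz x(3) vc zcne by simp
  show d4: "4 \<le> degree T z"
  proof (rule ccontr)
    assume "\<not> 4 \<le> degree T z"
    then have "degree T z = 3" using z(2) by simp
    then have "wgt (degree ?T' z) - wgt (degree T z) = -1" using dz by (simp add: wgt_def)
    then have "(\<Sum>y\<in>{v, x, z, c}. wgt (degree ?T' y) - wgt (degree T y)) \<le> -1"
      using sum dv v(2) wx wc by simp
    then show False using ec le by linarith
  qed
  have "3 \<le> degree ?T' z" using dz d4 by simp
  then have "wgt (degree ?T' z) - wgt (degree T z) = 0" using d4 by (simp add: wgt_def)
  then have "(\<Sum>y\<in>{v, x, z, c}. wgt (degree ?T' y) - wgt (degree T y)) \<le> 0"
    using sum dv v(2) wx wc by simp
  then have "cost V ?T' \<le> cost V T" using ec by linarith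
  then show "mincost V E ?T'" using mincost_eq[OF mc tr' sub'] by blast
  show "3 \<le> degree T y" if "3 \<le> degree ?T' y" for y
  proof -
    have "degree ?T' y + (if y = z \<or> y = c then 1 else 0) = degree T y + (if y = v \<or> y = x then 1 else 0)"
      using dg by blast
    then show ?thesis using that dv x(2) by (cases "y = v"; cases "y = x"; auto split: if_splits)
  qed
qed




definition config :: "'a set \<Rightarrow> 'a set set \<Rightarrow> 'a set set \<Rightarrow> 'a \<Rightarrow> 'a \<Rightarrow> bool" where
  "config V E T z c \<longleftrightarrow> mincost V E T \<and> z \<in> V \<and> 3 \<le> degree T z \<and> {z, c} \<in> T \<and>
     (\<forall>y\<in>V. 3 \<le> degree T y \<longrightarrow> y \<noteq> z \<longrightarrow> reach (T - {{z, c}}) c y)"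

locale cfgloc = tree_on V T
  for V :: "'a set" and T :: "'a set set" +
  fixes E :: "'a set set" and z c c1 c2 u v :: 'a
  assumes sg: "simple_graph V E"
    and cf: "config V E T z c"
    and minc: "\<And>T' c'. config V E T' z c' \<Longrightarrow> degree T z \<le> degree T' z"
    and zc1: "{z, c1} \<in> T" and c1c: "c1 \<noteq> c"
    and zc2: "{z, c2} \<in> T" and c2c: "c2 \<noteq> c" and c12: "c1 \<noteq> c2"
    and vl: "reach (Tz T z) c1 v" "degree T v = 1"
    and vu: "\<And>x. reach (Tz T z) c1 x \<Longrightarrow> degree T x = 1 \<Longrightarrow> x = v"
    and ul: "reach (Tz T z) c2 u" "degree T u = 1"
    and uu: "\<And>x. reach (Tz T z) c2 x \<Longrightarrow> degree T x = 1 \<Longrightarrow> x = u"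
begin

lemma mc: "mincost V E T" using cf unfolding config_def by blast
lemma zV: "z \<in> V" using cf unfolding config_def by blast
lemma dz: "3 \<le> degree T z" using cf unfolding config_def by blast
lemma zc: "{z, c} \<in> T" using cf unfolding config_def by blast
lemma endb: "y \<in> V \<Longrightarrow> 3 \<le> degree T y \<Longrightarrow> y \<noteq> z \<Longrightarrow> reach (T - {{z, c}}) c y"
  using cf unfolding config_def by blast

lemma Tz_T: "Tz T z \<subseteq> T" unfolding Tz_def by blast

lemma c1V: "c1 \<in> V" using edge_V[OF zc1] by simp
lemma c2V: "c2 \<in> V" using edge_V[OF zc2] by simp

lemma vV: "v \<in> V" using reach_V[OF vl(1) Tz_T c1V] .
lemma uV: "u \<in> V" using reach_V[OF ul(1) Tz_T c2V] .
lemma vz: "v \<noteq> z" using vl(2) dz by auto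
lemma uz: "u \<noteq> z" using ul(2) dz by auto

lemma disj12: "reach (Tz T z) c1 x \<Longrightarrow> reach (Tz T z) c2 x \<Longrightarrow> False"
  using comps_disj[OF zc1 zc2 c12] by blast

lemma uv: "u \<noteq> v"
proof
  assume "u = v"
  then show False using disj12 vl(1) ul(1) by simp
qed

lemma leg:
  assumes zc': "{z, c'} \<in> T" and c'c: "c' \<noteq> c" and r: "reach (Tz T z) c' x"
  shows "degree T x \<le> 2"
proof (rule ccontr)
  assume "\<not> degree T x \<le> 2"
  then have dx: "3 \<le> degree T x" by simp
  have c'V: "c' \<in> V" using edge_V[OF zc'] by simp
  have xV: "x \<in> V" using reach_V[OF r Tz_T c'V] .
  have r': "reach (T - {{z, c'}}) c' x" using side_Tz[OF zc'] r by blast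
  have xz: "x \<noteq> z"
  proof
    assume "x = z" then show False using r' bridge'[OF zc'] by simp
  qed
  have "reach (T - {{z, c}}) c x" using endb[OF xV dx xz] .
  then have "reach (Tz T z) c x" using side_Tz[OF zc] by blast
  then show False using comps_disj[OF zc zc' c'c[symmetric]] r by blast
qed

lemma nbrE_V: "x \<in> neighbours E y \<Longrightarrow> x \<in> V \<and> y \<in> V \<and> x \<noteq> y"
  using sg_edge[OF sg, of y x] by (auto simp: neighbours_def)

lemma F2:
  assumes xE: "x \<in> neighbours E v" and dx: "degree T x = 1"
  shows False
proof -
  have xV: "x \<in> V" and xv: "x \<noteq> v" using nbrE_V[OF xE] by auto
  have vxE: "{v, x} \<in> E" using xE by (simp add: neighbours_def)
  show False
  proof (cases "reach (Tz T z) c1 x")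
    case True
    then show False using vu dx xv by blast
  next
    case False
    have sep: "\<not> reach (Tz T z) v x"
    proof
      assume "reach (Tz T z) v x"
      then have "reach (Tz T z) c1 x" using reach_trans[OF vl(1)] by simp
      then show False using False by simp
    qed
    have xz: "x \<noteq> z" using dx dz by auto
    show False using across_leaf[OF mc sg vV vl(2) zV dz xV dx xz vz sep vxE] .
  qed
qed

lemma uvE: "{u, v} \<notin> E"
proof
  assume "{u, v} \<in> E"
  then have "u \<in> neighbours E v" by (simp add: neighbours_def insert_commute)
  then show False using F2 ul(2) by blast
qed

lemma F3:
  assumes xE: "x \<in> neighbours E v" and dx: "3 \<le> degree T x"
  shows "x = z"
proof (rule ccontr)
  assume xz: "x \<noteq> z"
  have xV: "x \<in> V" using nbrE_V[OF xE] by auto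
  have vxE: "{v, x} \<in> E" using xE by (simp add: neighbours_def)
  have cx: "reach (T - {{z, c}}) c x" using endb[OF xV dx xz] .
  have ncv: "\<not> reach (Tz T z) c v"
  proof
    assume "reach (Tz T z) c v"
    then show False using comps_disj[OF zc zc1 c1c[symmetric]] vl(1) by blast
  qed
  let ?T1 = "insert {v, x} (T - {{z, c}})"
  note be = branch_exch[OF mc sg vV vl(2) zV dz zc xV dx xz vz cx ncv vxE]
  have cfg: "config V E ?T1 z c1"
    unfolding config_def
  proof (intro conjI ballI impI)
    show "mincost V E ?T1" using be(2) .
    show "z \<in> V" using zV .
    show "3 \<le> degree ?T1 z" using be(1) be(3) by simp
    have "{z, c1} \<noteq> {z, c}" using c1c by (auto simp: doubleton_eq_iff)
    then show "{z, c1} \<in> ?T1" using zc1 by simp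
  next
    fix y assume yV: "y \<in> V" and dy: "3 \<le> degree ?T1 y" and yz: "y \<noteq> z"
    have dyT: "3 \<le> degree T y" using be(4)[OF dy] .
    have cy: "reach (Tz T z) c y" using side_Tz[OF zc] endb[OF yV dyT yz] by blast
    have cxz: "reach (Tz T z) c x" using side_Tz[OF zc] cx by blast
    have sub: "Tz T z \<subseteq> ?T1 - {{z, c1}}" unfolding Tz_def by auto
    have e1: "reach (?T1 - {{z, c1}}) c1 v" using reach_mono[OF sub vl(1)] .
    have "{v, x} \<in> ?T1 - {{z, c1}}" using vz xz by (auto simp: doubleton_eq_iff)
    then have e2: "reach (?T1 - {{z, c1}}) v x" by (rule reach_edge)
    have e3: "reach (?T1 - {{z, c1}}) x c" using reach_mono[OF sub reach_sym[OF cxz]] .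
    have e4: "reach (?T1 - {{z, c1}}) c y" using reach_mono[OF sub cy] .
    show "reach (?T1 - {{z, c1}}) c1 y"
      using reach_trans[OF reach_trans[OF reach_trans[OF e1 e2] e3] e4] .
  qed
  have "degree T z \<le> degree ?T1 z" using minc[OF cfg] .
  then show False using be(3) by simp
qed

lemma F4:
  assumes wE: "w \<in> neighbours E u" and uwT: "{u, w} \<notin> T"
    and ws: "{w, s} \<in> T" and nws: "\<not> reach (T - {{w, s}}) w u"
  shows "degree T s = 2" "s \<notin> neighbours E v"
proof -
  have uwE: "{u, w} \<in> E" using wE by (simp add: neighbours_def)
  have wV: "w \<in> V" and wu: "w \<noteq> u" using nbrE_V[OF wE] by auto
  note ne = nbr_exch[OF mc sg uV ul(2) uwE uwT ws nws]
  show ds: "degree T s = 2" using ne(1) .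
  have su: "s \<noteq> u" using ne(2) .
  let ?T2 = "insert {u, w} (T - {{w, s}})"
  have mc2: "mincost V E ?T2" using ne(3) .
  have sV: "s \<in> V" and ws_ne: "w \<noteq> s" using edge_V[OF ws] by auto
  have sz: "s \<noteq> z" using ds dz by auto
  have vw: "v \<noteq> w"
  proof
    assume "v = w" then show False using uwE uvE by simp
  qed
  have vs: "v \<noteq> s" using ds vl(2) by auto
  have uw_ne: "u \<noteq> w" using wu by simp
  have dg: "\<And>x. degree ?T2 x + (if x = w \<or> x = s then 1 else 0) = degree T x + (if x = u \<or> x = w then 1 else 0)"
    using exch_degree[OF nbr_fin ws ws_ne uwT uw_ne] by blast
  have dv2: "degree ?T2 v = 1" using dg[of v] vl(2) vw vs uv by auto
  have ds2: "degree ?T2 s = 1" using dg[of s] ds su ws_ne by auto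
  have dz2: "3 \<le> degree ?T2 z" using dg[of z] dz uz sz by (cases "z = w") auto
  have sep: "\<not> reach (Tz ?T2 z) v s"
  proof (cases "w = z")
    case True
    have eqT: "Tz ?T2 z = Tz T z" unfolding Tz_def using True by auto
    have c2u: "reach (T - {{z, c2}}) c2 u" using side_Tz[OF zc2] ul(1) by blast
    have nzu: "\<not> reach (T - {{z, c2}}) z u"
    proof
      assume "reach (T - {{z, c2}}) z u"
      then have "reach (T - {{z, c2}}) z c2" using reach_trans[OF _ reach_sym[OF c2u]] by simp
      then show False using bridge[OF zc2] by simp
    qed
    have zs: "{z, s} \<in> T" using ws True by simp
    have nzs: "\<not> reach (T - {{z, s}}) z u" using nws True by simp
    have "s = c2" using toward_uniq[OF zV uV uz[symmetric] zs nzs zc2 nzu] .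
    show ?thesis
    proof
      assume "reach (Tz ?T2 z) v s"
      then have "reach (Tz T z) v c2" using eqT \<open>s = c2\<close> by simp
      then have "reach (Tz T z) c1 c2" using reach_trans[OF vl(1)] by simp
      then show False using disj12[OF _ reach_refl] by blast
    qed
  next
    case False
    have wz: "w \<noteq> z" using False .
    let ?F = "Tz T z - {{w, s}}"
    have sub2: "Tz ?T2 z \<subseteq> insert {u, w} ?F" unfolding Tz_def by auto
    have wsTz: "{w, s} \<in> Tz T z" using ws wz sz unfolding Tz_def by auto
    have FT: "?F \<subseteq> Tz T z" by blast
    show ?thesis
    proof
      assume "reach (Tz ?T2 z) v s"
      then have "reach (insert {u, w} ?F) v s" using reach_mono[OF sub2] by blast
      then have cases: "reach ?F v s \<or> (reach ?F v u \<and> reach ?F w s) \<or> (reach ?F v w \<and> reach ?F u s)"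
        by (rule reach_insert)
      then show False
      proof (elim disjE conjE)
        assume h: "reach ?F v s"
        have vsz: "reach (Tz T z) v s" using reach_mono[OF FT h] .
        have c1s: "reach (Tz T z) c1 s" using reach_trans[OF vl(1) vsz] .
        have c1w: "reach (Tz T z) c1 w" using reach_step[OF c1s] wsTz by (simp add: insert_commute)
        have nw: "\<And>y. reach (Tz T z) c2 y \<Longrightarrow> y \<noteq> w"
        proof
          fix y assume "reach (Tz T z) c2 y" "y = w"
          then show False using disj12 c1w by simp
        qed
        have a1: "reach {f\<in>Tz T z. w \<notin> f} c2 u" using reach_avoid[OF ul(1) nw] .
        have s1: "{f\<in>Tz T z. w \<notin> f} \<subseteq> T - {{w, s}}" unfolding Tz_def by auto
        have c2u: "reach (T - {{w, s}}) c2 u" using reach_mono[OF s1 a1] .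
        have "{z, c2} \<in> T - {{w, s}}" using zc2 wz sz by (auto simp: doubleton_eq_iff)
        then have zu: "reach (T - {{w, s}}) z u" using reach_trans[OF reach_edge c2u] by blast
        have nwz: "\<not> reach (T - {{w, s}}) w z"
        proof
          assume "reach (T - {{w, s}}) w z"
          then have "reach (T - {{w, s}}) w u" using reach_trans[OF _ zu] by simp
          then show False using nws by simp
        qed
        have inleg: "reach (Tz T z) c1 x" if hx: "reach (T - {{w, s}}) w x" for x
        proof -
          have nz: "\<And>y. reach (T - {{w, s}}) w y \<Longrightarrow> y \<noteq> z" using nwz by blast
          have a: "reach {f\<in>T - {{w, s}}. z \<notin> f} w x" using reach_avoid[OF hx nz] .
          have s: "{f\<in>T - {{w, s}}. z \<notin> f} \<subseteq> Tz T z" unfolding Tz_def by blast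
          show ?thesis using reach_trans[OF c1w reach_mono[OF s a]] .
        qed
        have bl: "\<And>x. reach (T - {{w, s}}) w x \<Longrightarrow> degree T x \<le> 2"
          using leg[OF zc1 c1c] inleg by blast
        obtain l where l1: "reach (T - {{w, s}}) w l" and l2: "degree T l = 1"
          using unique_leaf[OF ws bl] by blast
        have "l = v" using vu[OF inleg[OF l1] l2] .
        then have wv: "reach (T - {{w, s}}) w v" using l1 by simp
        have s3: "?F \<subseteq> T - {{w, s}}" unfolding Tz_def by blast
        have "reach (T - {{w, s}}) v s" using reach_mono[OF s3 h] .
        then have "reach (T - {{w, s}}) w s" using reach_trans[OF wv] by simp
        then show False using bridge[OF ws] by simp
      next
        assume h: "reach ?F v u"
        have "reach (Tz T z) c1 u" using reach_trans[OF vl(1) reach_mono[OF FT h]] .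
        then show False using disj12 ul(1) by blast
      next
        assume h1: "reach ?F v w" and h2: "reach ?F u s"
        have c1w: "reach (Tz T z) c1 w" using reach_trans[OF vl(1) reach_mono[OF FT h1]] .
        have c2s: "reach (Tz T z) c2 s" using reach_trans[OF ul(1) reach_mono[OF FT h2]] .
        have "reach (Tz T z) c2 w" using reach_step[OF c2s] wsTz by (simp add: insert_commute)
        then show False using disj12 c1w by blast
      qed
    qed
  qed
  have trT2: "tree_on V ?T2" using mincost_tree[OF mc2] .
  show "s \<notin> neighbours E v"
  proof
    assume "s \<in> neighbours E v"
    then have vsE: "{v, s} \<in> E" by (simp add: neighbours_def)
    show False using across_leaf[OF mc2 sg vV dv2 zV dz2 sV ds2 sz vz sep vsE] .
  qed
qed

lemma deg_ge1: "x \<in> V \<Longrightarrow> 1 \<le> degree T x"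
proof -
  assume xV: "x \<in> V"
  have "z \<noteq> c1" using edge_V[OF zc1] by simp
  then show ?thesis
  proof (cases "x = z")
    case True then show ?thesis using dz by simp
  next
    case False show ?thesis using deg_pos[OF xV zV False] .
  qed
qed

lemma toward_not_back:
  assumes ws: "{w, s} \<in> T" and nws: "\<not> reach (T - {{w, s}}) w u"
    and st: "{s, w} \<in> T" and nsu: "\<not> reach (T - {{s, w}}) s u"
  shows False
proof -
  have e: "T - {{s, w}} = T - {{w, s}}" by (simp add: insert_commute)
  show False using cut[OF ws uV] nws nsu e by simp
qed

lemma count:
  assumes nb: "neighbours T u = {u'}"
  shows "degree E u + degree E v + cost V T \<le> card V + 2"
proof -
  let ?A = "neighbours E u - {u'}"
  let ?f = "\<lambda>w. toward w u"
  let ?D2 = "{x\<in>V. degree T x = 2}"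
  have finNE: "\<And>y. finite (neighbours E y)"
  proof -
    fix y have "neighbours E y \<subseteq> V" using nbrE_V by blast
    then show "finite (neighbours E y)" using fin finite_subset by blast
  qed
  have uu'T: "{u, u'} \<in> T" using nb by (simp add: in_nbr[symmetric])
  have "{u, u'} \<in> E" using uu'T mincost_sub[OF mc] by blast
  then have u'E: "u' \<in> neighbours E u" by (simp add: neighbours_def)
  have cu: "degree E u = card ?A + 1"
  proof -
    have "card (neighbours E u) > 0" using u'E finNE[of u] card_gt_0_iff by blast
    then show ?thesis unfolding degree_def using u'E finNE[of u] by (simp add: card_Diff_singleton)
  qed
  have props: "{w, ?f w} \<in> T \<and> \<not> reach (T - {{w, ?f w}}) w u \<and> degree T (?f w) = 2 \<and> ?f w \<notin> neighbours E v"
    if wA: "w \<in> ?A" for w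
  proof -
    have wE: "w \<in> neighbours E u" using wA by simp
    have wV: "w \<in> V" and wu: "w \<noteq> u" using nbrE_V[OF wE] by auto
    have uwT: "{u, w} \<notin> T"
    proof
      assume "{u, w} \<in> T" then have "w \<in> neighbours T u" by (simp add: in_nbr)
      then show False using nb wA by simp
    qed
    have t1: "{w, ?f w} \<in> T" and t2: "\<not> reach (T - {{w, ?f w}}) w u" using toward[OF wV uV wu] by auto
    show ?thesis using t1 t2 F4[OF wE uwT t1 t2] by blast
  qed
  have inj: "inj_on ?f ?A"
  proof (rule inj_onI)
    fix w1 w2 assume w1: "w1 \<in> ?A" and w2: "w2 \<in> ?A" and eq: "?f w1 = ?f w2"
    show "w1 = w2"
    proof (rule ccontr)
      assume ne: "w1 \<noteq> w2"
      define s where "s = ?f w1"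
      have p1: "{w1, s} \<in> T" "\<not> reach (T - {{w1, s}}) w1 u" "degree T s = 2"
        using props[OF w1] unfolding s_def by auto
      have p2: "{w2, s} \<in> T" "\<not> reach (T - {{w2, s}}) w2 u"
        using props[OF w2] eq unfolding s_def by auto
      have sV: "s \<in> V" using edge_V[OF p1(1)] by simp
      have su: "s \<noteq> u" using p1(3) ul(2) by auto
      define t where "t = toward s u"
      have st: "{s, t} \<in> T" and nst: "\<not> reach (T - {{s, t}}) s u"
        using toward[OF sV uV su] unfolding t_def by auto
      have tw1: "t \<noteq> w1"
      proof
        assume "t = w1"
        then show False using toward_not_back[OF p1(1) p1(2)] st nst by simp
      qed
      have tw2: "t \<noteq> w2"
      proof
        assume "t = w2"
        then show False using toward_not_back[OF p2(1) p2(2)] st nst by simp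
      qed
      have "{w1, w2, t} \<subseteq> neighbours T s"
        using p1(1) p2(1) st by (auto simp: in_nbr insert_commute)
      then have "card {w1, w2, t} \<le> card (neighbours T s)" using card_mono[OF nbr_fin] by blast
      moreover have "card {w1, w2, t} = 3" using ne tw1 tw2 by auto
      ultimately show False using p1(3) unfolding degree_def by simp
    qed
  qed
  have finA: "finite ?A" using finNE[of u] by simp
  have cfA: "card (?f ` ?A) = card ?A" using card_image[OF inj] .
  have fA_D2: "?f ` ?A \<subseteq> ?D2"
  proof
    fix x assume "x \<in> ?f ` ?A"
    then obtain w where wA: "w \<in> ?A" and x: "x = ?f w" by blast
    have "{w, x} \<in> T" "degree T x = 2" using props[OF wA] x by auto
    then show "x \<in> ?D2" using edge_V by blast
  qed
  have finD2: "finite ?D2" using fin by simp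
  have nv: "neighbours E v \<subseteq> (?D2 - ?f ` ?A) \<union> {z}"
  proof
    fix x assume xE: "x \<in> neighbours E v"
    have xV: "x \<in> V" using nbrE_V[OF xE] by simp
    have d1: "degree T x \<noteq> 1" using F2[OF xE] by blast
    have d0: "1 \<le> degree T x" using deg_ge1[OF xV] .
    show "x \<in> (?D2 - ?f ` ?A) \<union> {z}"
    proof (cases "3 \<le> degree T x")
      case True then show ?thesis using F3[OF xE] by simp
    next
      case False
      then have "degree T x = 2" using d1 d0 by simp
      moreover have "x \<notin> ?f ` ?A" using props xE by blast
      ultimately show ?thesis using xV by simp
    qed
  qed
  have "card (neighbours E v) \<le> card ((?D2 - ?f ` ?A) \<union> {z})"
    using card_mono[OF _ nv] finD2 by simp
  also have "\<dots> \<le> card (?D2 - ?f ` ?A) + 1" using card_Un_le[of "?D2 - ?f ` ?A" "{z}"] by simp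
  also have "card (?D2 - ?f ` ?A) = card ?D2 - card ?A"
    using card_Diff_subset[OF finite_imageI[OF finA] fA_D2] cfA by simp
  finally have cv: "degree E v \<le> card ?D2 - card ?A + 1" unfolding degree_def .
  have AD: "card ?A \<le> card ?D2" using card_mono[OF finD2 fA_D2] cfA by simp
  have Vpart: "V = leaves V T \<union> branch_vertices V T \<union> ?D2"
  proof
    show "V \<subseteq> leaves V T \<union> branch_vertices V T \<union> ?D2"
    proof
      fix x assume xV: "x \<in> V"
      have "1 \<le> degree T x" using deg_ge1[OF xV] .
      then have "degree T x = 1 \<or> 3 \<le> degree T x \<or> degree T x = 2" by linarith
      then show "x \<in> leaves V T \<union> branch_vertices V T \<union> ?D2"
        using xV unfolding leaves_def branch_vertices_def by blast
    qed
  qed (auto simp: leaves_def branch_vertices_def)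
  have finL: "finite (leaves V T)" using fin unfolding leaves_def by simp
  have finB: "finite (branch_vertices V T)" using fin unfolding branch_vertices_def by simp
  have "card V = card (leaves V T \<union> branch_vertices V T) + card ?D2"
    by (subst Vpart, rule card_Un_disjoint) (use finL finB finD2 in \<open>auto simp: leaves_def branch_vertices_def\<close>)
  also have "card (leaves V T \<union> branch_vertices V T) = card (leaves V T) + card (branch_vertices V T)"
    by (rule card_Un_disjoint) (use finL finB in \<open>auto simp: leaves_def branch_vertices_def\<close>)
  finally have cV: "card V = cost V T + card ?D2" unfolding cost_def by simp
  show ?thesis using cu cv AD cV by linarith
qed

end




lemma leg_gen:
  assumes cf: "config V E T z c" and zc': "{z, c'} \<in> T" and c'c: "c' \<noteq> c" and r: "reach (Tz T z) c' x"
  shows "degree T x \<le> 2"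
proof (rule ccontr)
  have mc: "mincost V E T" and zc: "{z, c} \<in> T"
    and endb: "\<And>y. y \<in> V \<Longrightarrow> 3 \<le> degree T y \<Longrightarrow> y \<noteq> z \<Longrightarrow> reach (T - {{z, c}}) c y"
    using cf unfolding config_def by blast+
  interpret tree_on V T using mincost_tree[OF mc] .
  assume "\<not> degree T x \<le> 2"
  then have dx: "3 \<le> degree T x" by simp
  have c'V: "c' \<in> V" using edge_V[OF zc'] by simp
  have TzT: "Tz T z \<subseteq> T" unfolding Tz_def by blast
  have xV: "x \<in> V" using reach_V[OF r TzT c'V] .
  have r': "reach (T - {{z, c'}}) c' x" using side_Tz[OF zc'] r by blast
  have xz: "x \<noteq> z"
  proof
    assume "x = z" then show False using r' bridge'[OF zc'] by simp
  qed
  have "reach (T - {{z, c}}) c x" using endb[OF xV dx xz] .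
  then have "reach (Tz T z) c x" using side_Tz[OF zc] by blast
  then show False using comps_disj[OF zc zc' c'c[symmetric]] r by blast
qed

lemma leaf_in_leg:
  assumes cf: "config V E T z c" and zc': "{z, c'} \<in> T" and c'c: "c' \<noteq> c"
  shows "\<exists>l. reach (Tz T z) c' l \<and> degree T l = 1 \<and> (\<forall>x. reach (Tz T z) c' x \<longrightarrow> degree T x = 1 \<longrightarrow> x = l)"
proof -
  have mc: "mincost V E T" using cf unfolding config_def by blast
  interpret tree_on V T using mincost_tree[OF mc] .
  have e: "T - {{c', z}} = T - {{z, c'}}" by (simp add: insert_commute)
  have c'z: "{c', z} \<in> T" using zc' by (simp add: insert_commute)
  have bl: "\<And>x. reach (T - {{c', z}}) c' x \<Longrightarrow> degree T x \<le> 2"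
  proof -
    fix x assume "reach (T - {{c', z}}) c' x"
    then have "reach (Tz T z) c' x" using side_Tz[OF zc'] e by simp
    then show "degree T x \<le> 2" using leg_gen[OF cf zc' c'c] by blast
  qed
  obtain l where l1: "reach (T - {{c', z}}) c' l" and l2: "degree T l = 1"
    and l3: "\<forall>x. reach (T - {{c', z}}) c' x \<longrightarrow> degree T x = 1 \<longrightarrow> x = l"
    using unique_leaf[OF c'z bl] by blast
  have eq: "\<And>x. reach (T - {{c', z}}) c' x \<longleftrightarrow> reach (Tz T z) c' x" using side_Tz[OF zc'] e by simp
  show ?thesis using l1 l2 l3 eq by blast
qed

lemma main_count:
  assumes sg: "simple_graph V E" and cf: "config V E T z c"
    and minc0: "\<forall>T' c'. config V E T' z c' \<longrightarrow> degree T z \<le> degree T' z"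
  shows "\<exists>u v. u \<in> V \<and> v \<in> V \<and> u \<noteq> v \<and> {u, v} \<notin> E \<and> degree E u + degree E v + cost V T \<le> card V + 2"
proof -
  have mc: "mincost V E T" and dz: "3 \<le> degree T z" and zc: "{z, c} \<in> T"
    using cf unfolding config_def by blast+
  have minc: "\<And>T' c'. config V E T' z c' \<Longrightarrow> degree T z \<le> degree T' z" using minc0 by blast
  have trT: "tree_on V T" using mincost_tree[OF mc] .
  interpret tree_on V T by (rule trT)
  let ?N = "neighbours T z - {c}"
  have cN: "c \<in> neighbours T z" using zc by (simp add: in_nbr)
  have "card ?N \<ge> 2" using dz cN nbr_fin unfolding degree_def by (simp add: card_Diff_singleton)
  have "?N \<noteq> {}"
  proof
    assume h: "?N = {}"
    have "card ?N = 0" by (simp only: h card.empty)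
    then show False using \<open>card ?N \<ge> 2\<close> by linarith
  qed
  then obtain c1 where c1: "c1 \<in> ?N" by blast
  have "card (?N - {c1}) \<ge> 1" using \<open>card ?N \<ge> 2\<close> c1 nbr_fin by (simp add: card_Diff_singleton)
  have "?N - {c1} \<noteq> {}"
  proof
    assume h: "?N - {c1} = {}"
    have "card (?N - {c1}) = 0" by (simp only: h card.empty)
    then show False using \<open>card (?N - {c1}) \<ge> 1\<close> by linarith
  qed
  then obtain c2 where c2: "c2 \<in> ?N - {c1}" by blast
  have zc1: "{z, c1} \<in> T" and c1c: "c1 \<noteq> c" using c1 by (auto simp: in_nbr)
  have zc2: "{z, c2} \<in> T" and c2c: "c2 \<noteq> c" and c12: "c1 \<noteq> c2" using c2 by (auto simp: in_nbr)
  obtain v where v: "reach (Tz T z) c1 v" "degree T v = 1" "\<forall>x. reach (Tz T z) c1 x \<longrightarrow> degree T x = 1 \<longrightarrow> x = v"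
    using leaf_in_leg[OF cf zc1 c1c] by blast
  obtain u where u: "reach (Tz T z) c2 u" "degree T u = 1" "\<forall>x. reach (Tz T z) c2 x \<longrightarrow> degree T x = 1 \<longrightarrow> x = u"
    using leaf_in_leg[OF cf zc2 c2c] by blast
  have vu: "\<And>x. reach (Tz T z) c1 x \<Longrightarrow> degree T x = 1 \<Longrightarrow> x = v" using v(3) by blast
  have uu: "\<And>x. reach (Tz T z) c2 x \<Longrightarrow> degree T x = 1 \<Longrightarrow> x = u" using u(3) by blast
  interpret cfgloc V T E z c c1 c2 u v
    by (rule cfgloc.intro[OF trT cfgloc_axioms.intro[OF sg cf minc zc1 c1c zc2 c2c c12 v(1) v(2) vu u(1) u(2) uu]])
  have "card (neighbours T u) = 1" using u(2) unfolding degree_def .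
  then obtain u' where nb: "neighbours T u = {u'}" by (metis card_1_singletonE)
  show ?thesis using count[OF nb] uV vV uv uvE by blast
qed

theorem mainTheorem2:
  fixes V :: "'a set" and E :: "'a set set" and k :: nat
  assumes "simple_graph V E"
    and "connected_graph V E"
    and "K14_free V E"
    and "k \<ge> 1"
    and "sigma 2 V E \<ge> enat (card V - k)"
  shows "\<exists>T. spanning_tree V E T \<and>
           card (leaves V T) + card (branch_vertices V T) \<le> k + 2"
proof -
  have sg: "simple_graph V E" using assms(1) .
  have finV: "finite V" using sg unfolding simple_graph_def by blast
  obtain T0 where mc0: "mincost V E T0" using mincost_exists[OF assms(1,2)] by blast
  have costV: "cost V T \<le> card V" for T
  proof -
    have "cost V T = card (leaves V T \<union> branch_vertices V T)"
      unfolding cost_def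
      by (rule card_Un_disjoint[symmetric]) (use finV in \<open>auto simp: leaves_def branch_vertices_def\<close>)
    also have "\<dots> \<le> card V" by (rule card_mono[OF finV]) (auto simp: leaves_def branch_vertices_def)
    finally show ?thesis .
  qed
  show ?thesis
  proof (cases "\<forall>x\<in>V. degree T0 x \<le> 2")
    case True
    interpret tree_on V T0 using mincost_tree[OF mc0] .
    have "card (leaves V T0) \<le> 2" using leaves_le2[OF True] .
    moreover have "branch_vertices V T0 = {}" using True unfolding branch_vertices_def by fastforce
    ultimately have "card (leaves V T0) + card (branch_vertices V T0) \<le> k + 2" by simp
    then show ?thesis using mc0 unfolding mincost_def by blast
  next
    case False
    interpret tree_on V T0 using mincost_tree[OF mc0] .
    have "\<exists>z\<in>V. 3 \<le> degree T0 z" using False by (metis Suc_leI not_le numeral_2_eq_2 numeral_3_eq_3)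
    then obtain z0 c0 where "z0 \<in> V" "3 \<le> degree T0 z0" "{z0, c0} \<in> T0"
      "\<forall>y\<in>V. 3 \<le> degree T0 y \<longrightarrow> y \<noteq> z0 \<longrightarrow> reach (T0 - {{z0, c0}}) c0 y"
      using end_branch by blast
    then have cf0: "config V E T0 z0 c0" unfolding config_def using mc0 by blast
    let ?P = "\<lambda>(T, z, c). config V E T z c"
    let ?m = "\<lambda>(T, z, c). degree T z"
    have "?P (T0, z0, c0)" using cf0 by simp
    then obtain tzc where P: "?P tzc" and min: "\<And>y. ?P y \<Longrightarrow> ?m tzc \<le> ?m y"
      using ex_has_least_nat[of ?P "(T0, z0, c0)" ?m] by blast
    obtain T z c where tzc: "tzc = (T, z, c)" by (cases tzc) auto
    have cf: "config V E T z c" using P tzc by simp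
    have minc: "\<forall>T' c'. config V E T' z c' \<longrightarrow> degree T z \<le> degree T' z"
    proof (intro allI impI)
      fix T' c' assume "config V E T' z c'"
      then have "?P (T', z, c')" by simp
      then have "?m tzc \<le> ?m (T', z, c')" by (rule min)
      then show "degree T z \<le> degree T' z" using tzc by simp
    qed
    obtain u v where uv: "u \<in> V" "v \<in> V" "u \<noteq> v" "{u, v} \<notin> E"
      and cnt: "degree E u + degree E v + cost V T \<le> card V + 2"
      using main_count[OF sg cf minc] by blast
    have ind: "independent_set V E {u, v}"
      unfolding independent_set_def
    proof (intro conjI ballI)
      show "{u, v} \<subseteq> V" using uv by simp
    next
      fix a b assume a: "a \<in> {u, v}" and b: "b \<in> {u, v}"
      show "{a, b} \<notin> E"
      proof
        assume ab: "{a, b} \<in> E"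
        have "a \<noteq> b" using sg_edge[OF sg ab] by simp
        then have "{a, b} = {u, v}" using a b by auto
        then show False using ab uv(4) by simp
      qed
    qed
    have "sigma 2 V E \<le> enat (\<Sum>x\<in>{u, v}. degree E x)"
    proof -
      have "card {u, v} = 2" using uv(3) by simp
      then have "enat (\<Sum>x\<in>{u, v}. degree E x) \<in> {enat (\<Sum>v\<in>S. degree E v) | S. independent_set V E S \<and> card S = 2}"
        using ind by blast
      then show ?thesis unfolding sigma_def by (rule Inf_lower)
    qed
    also have "(\<Sum>x\<in>{u, v}. degree E x) = degree E u + degree E v" using uv(3) by simp
    finally have s1: "sigma 2 V E \<le> enat (degree E u + degree E v)" .
    have "enat (card V - k) \<le> enat (degree E u + degree E v)" using order_trans[OF assms(5) s1] .
    then have sig: "card V - k \<le> degree E u + degree E v" by simp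
    have "cost V T \<le> k + 2" using sig cnt costV[of T] by linarith
    moreover have "spanning_tree V E T" using cf unfolding config_def mincost_def by blast
    ultimately show ?thesis unfolding cost_def by blast
  qed
qed


end
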